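(* In the setting below, let $f_1,\dots,f_n$ be $x$-monomials $f_i=a_ix_1^{b_{i1}}\cdots x_n^{b_{in}}$ with $a_i\in K_w[\mathcal G]$ nonzero and $\det(b_{ij})\ne0$, and let $\Phi(\mathbf x)=\sum_{\mathbf k}\phi_{\mathbf k}\mathbf x^{\mathbf k}\in K_w^{\mathbf f}[\mathcal G\oplus\mathcal H]$. Then $\Phi(f_1,\dots,f_n)$ exists in $K_w[\mathcal G\oplus\mathcal H]$ and $$\mathop{\mathrm{CT}}_{\mathbf x}\Phi(f_1,\dots,f_n)=\mathop{\mathrm{CT}}_{f_1,\dots,f_n}\Phi(f_1,\dots,f_n)=\phi_{\mathbf 0}.$$
   Context: $K$ a field; $\mathcal G\oplus\mathcal H$ a totally ordered abelian group (translation-invariant total order) with $\mathcal H\cong\mathbb Z^n$ with basis $e_1,\dots,e_n$, $x_i=t^{e_i}$; $K_w[\cdot]$ denotes Malcev–Neumann series (formal series with well-ordered support); elements of $K_w[\mathcal G\oplus\mathcal H]$ are written $\sum_{\mathbf k}b_{\mathbf k}\mathbf x^{\mathbf k}$, $b_{\mathbf k}\in K_w[\mathcal G]$, and $\mathop{\mathrm{CT}}_{\mathbf x}$ extracts $b_{\mathbf 0}$. An $x$-monomial is a series with exactly one nonzero term $b_{\mathbf k}\mathbf x^{\mathbf k}$. If the initial (least-order) term of $f_i$ is $c_it^{g_i}\mathbf x^{\mathbf b_i}$ ($c_i\in K$, $g_i\in\mathcal G$), $\mathbf f$ denotes the injective endomorphism of $\mathcal G\oplus\mathcal H$ fixing $\mathcal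 G$ with $e_i\mapsto g_i+\sum_jb_{ij}e_j$, and $K_w^{\mathbf f}[\mathcal G\oplus\mathcal H]$ is the field of formal series whose support is well-ordered for the order $a\le^{\mathbf f}b\iff\mathbf f(a)\le\mathbf f(b)$. $\mathop{\mathrm{CT}}_{f_1,\dots,f_n}\Phi(f_1,\dots,f_n)$ denotes the coefficient $\phi_{\mathbf 0}$ of $\Phi(\mathbf x)$ viewed in $K_w^{\mathbf f}[\mathcal G\oplus\mathcal H]$; $\Phi(f_1,\dots,f_n)=\sum_{\mathbf k}\phi_{\mathbf k}f_1^{k_1}\cdots f_n^{k_n}$. *)

theory Defs
  imports Main "HOL-Combinatorics.Permutations"
begin

text \<open>The ambient group G (+) H with H = Z^n is modelled as pairs (g, k) with
  g :: 'g (an arbitrary abelian group) and k :: nat => int an exponent vector;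
  only vectors with k i = 0 for i >= n belong to H.\<close>

type_synonym 'g grp = "'g \<times> (nat \<Rightarrow> int)"

definition Hn :: "nat \<Rightarrow> (nat \<Rightarrow> int) set" where
  "Hn n = {k. \<forall>i\<ge>n. k i = 0}"

definition grp_carrier :: "nat \<Rightarrow> ('g::ab_group_add) grp set" where
  "grp_carrier n = UNIV \<times> Hn n"

definition gadd :: "('g::ab_group_add) grp \<Rightarrow> 'g grp \<Rightarrow> 'g grp" where
  "gadd x y = (fst x + fst y, \<lambda>i. snd x i + snd y i)"

definition gzero :: "('g::ab_group_add) grp" where
  "gzero = (0, \<lambda>_. 0)"

definition ordered_group_on :: "('g::ab_group_add) grp set \<Rightarrow> ('g grp \<Rightarrow> 'g grp \<Rightarrow> bool) \<Rightarrow> bool" where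
  "ordered_group_on C le \<longleftrightarrow>
     (\<forall>a\<in>C. le a a) \<and>
     (\<forall>a\<in>C. \<forall>b\<in>C. le a b \<and> le b a \<longrightarrow> a = b) \<and>
     (\<forall>a\<in>C. \<forall>b\<in>C. \<forall>c\<in>C. le a b \<and> le b c \<longrightarrow> le a c) \<and>
     (\<forall>a\<in>C. \<forall>b\<in>C. le a b \<or> le b a) \<and>
     (\<forall>a\<in>C. \<forall>b\<in>C. \<forall>c\<in>C. le a b \<longrightarrow> le (gadd a c) (gadd b c))"

definition leG :: "('g grp \<Rightarrow> 'g grp \<Rightarrow> bool) \<Rightarrow> 'g \<Rightarrow> 'g \<Rightarrow> bool" where
  "leG le g h = le (g, \<lambda>_. 0) (h, \<lambda>_. 0)"

definition supp :: "('a \<Rightarrow> 'k::zero) \<Rightarrow> 'a set" where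
  "supp s = {a. s a \<noteq> 0}"

definition well_ordered_on :: "('a \<Rightarrow> 'a \<Rightarrow> bool) \<Rightarrow> 'a set \<Rightarrow> bool" where
  "well_ordered_on le S \<longleftrightarrow> (\<forall>T\<subseteq>S. T \<noteq> {} \<longrightarrow> (\<exists>m\<in>T. \<forall>t\<in>T. le m t))"

definition MN :: "('a \<Rightarrow> 'a \<Rightarrow> bool) \<Rightarrow> 'a set \<Rightarrow> ('a \<Rightarrow> 'k::zero) set" where
  "MN le C = {s. supp s \<subseteq> C \<and> well_ordered_on le (supp s)}"

definition smult :: "('g::ab_group_add grp \<Rightarrow> 'k::field) \<Rightarrow> ('g grp \<Rightarrow> 'k) \<Rightarrow> 'g grp \<Rightarrow> 'k" where
  "smult s t c = (\<Sum>p\<in>{(a, b). a \<in> supp s \<and> b \<in> supp t \<and> gadd a b = c}. s (fst p) * t (snd p))"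

definition sone :: "'g::ab_group_add grp \<Rightarrow> 'k::field" where
  "sone c = (if c = gzero then 1 else 0)"

fun snpow :: "('g::ab_group_add grp \<Rightarrow> 'k::field) \<Rightarrow> nat \<Rightarrow> 'g grp \<Rightarrow> 'k" where
  "snpow s 0 = sone"
| "snpow s (Suc m) = smult s (snpow s m)"

definition sinv :: "('g::ab_group_add grp \<Rightarrow> 'g grp \<Rightarrow> bool) \<Rightarrow> 'g grp set \<Rightarrow> ('g grp \<Rightarrow> 'k::field) \<Rightarrow> 'g grp \<Rightarrow> 'k" where
  "sinv le C s = (THE u. u \<in> MN le C \<and> smult s u = sone)"

definition sipow :: "('g::ab_group_add grp \<Rightarrow> 'g grp \<Rightarrow> bool) \<Rightarrow> 'g grp set \<Rightarrow> ('g grp \<Rightarrow> 'k::field) \<Rightarrow> int \<Rightarrow> 'g grp \<Rightarrow> 'k" where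
  "sipow le C s k = (if 0 \<le> k then snpow s (nat k) else snpow (sinv le C s) (nat (- k)))"

fun sprod :: "(nat \<Rightarrow> 'g::ab_group_add grp \<Rightarrow> 'k::field) \<Rightarrow> nat \<Rightarrow> 'g grp \<Rightarrow> 'k" where
  "sprod F 0 = sone"
| "sprod F (Suc m) = smult (sprod F m) (F m)"

definition summable_fam :: "('a \<Rightarrow> 'a \<Rightarrow> bool) \<Rightarrow> 'a set \<Rightarrow> ('i \<Rightarrow> 'a \<Rightarrow> 'k::zero) \<Rightarrow> 'i set \<Rightarrow> bool" where
  "summable_fam le C F I \<longleftrightarrow>
     (\<Union>i\<in>I. supp (F i)) \<subseteq> C \<and> well_ordered_on le (\<Union>i\<in>I. supp (F i)) \<and>
     (\<forall>c. finite {i\<in>I. F i c \<noteq> 0})"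

definition sum_fam :: "('i \<Rightarrow> 'a \<Rightarrow> 'k::comm_monoid_add) \<Rightarrow> 'i set \<Rightarrow> 'a \<Rightarrow> 'k" where
  "sum_fam F I c = (\<Sum>i\<in>{i\<in>I. F i c \<noteq> 0}. F i c)"

definition CT_x :: "('g grp \<Rightarrow> 'k) \<Rightarrow> 'g \<Rightarrow> 'k" where
  "CT_x s = (\<lambda>g. s (g, \<lambda>_. 0))"

definition embG :: "('g \<Rightarrow> 'k::zero) \<Rightarrow> 'g grp \<Rightarrow> 'k" where
  "embG a x = (if snd x = (\<lambda>_. 0) then a (fst x) else 0)"

definition coeffx :: "('g grp \<Rightarrow> 'k) \<Rightarrow> (nat \<Rightarrow> int) \<Rightarrow> 'g \<Rightarrow> 'k" where
  "coeffx Phi k = (\<lambda>g. Phi (g, k))"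

definition xmono :: "('g \<Rightarrow> 'k::zero) \<Rightarrow> (nat \<Rightarrow> int) \<Rightarrow> 'g grp \<Rightarrow> 'k" where
  "xmono a b x = (if snd x = b then a (fst x) else 0)"

definition zsmul :: "int \<Rightarrow> 'g::ab_group_add \<Rightarrow> 'g" where
  "zsmul k g = (if 0 \<le> k then (\<Sum>_<nat k. g) else - (\<Sum>_<nat (- k). g))"

definition init_exp :: "('g \<Rightarrow> 'g \<Rightarrow> bool) \<Rightarrow> ('g \<Rightarrow> 'k::zero) \<Rightarrow> 'g" where
  "init_exp le a = (THE g. g \<in> supp a \<and> (\<forall>h\<in>supp a. le g h))"

definition det_n :: "nat \<Rightarrow> (nat \<Rightarrow> nat \<Rightarrow> int) \<Rightarrow> int" where
  "det_n n B = (\<Sum>p | p permutes {..<n}. sign p * (\<Prod>i<n. B i (p i)))"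

definition brow :: "nat \<Rightarrow> (nat \<Rightarrow> nat \<Rightarrow> int) \<Rightarrow> nat \<Rightarrow> nat \<Rightarrow> int" where
  "brow n B i = (\<lambda>j. if j < n then B i j else 0)"

text \<open>The endomorphism f of G (+) H: fixes G, e_i maps to g_i + sum_j b_ij e_j.\<close>
definition fmap :: "nat \<Rightarrow> (nat \<Rightarrow> 'g::ab_group_add) \<Rightarrow> (nat \<Rightarrow> nat \<Rightarrow> int) \<Rightarrow> 'g grp \<Rightarrow> 'g grp" where
  "fmap n gs B x = (fst x + (\<Sum>i<n. zsmul (snd x i) (gs i)),
                    \<lambda>j. \<Sum>i<n. snd x i * brow n B i j)"

definition le_f :: "('g grp \<Rightarrow> 'g grp \<Rightarrow> bool) \<Rightarrow> nat \<Rightarrow> (nat \<Rightarrow> 'g::ab_group_add) \<Rightarrow> (nat \<Rightarrow> nat \<Rightarrow> int) \<Rightarrow> 'g grp \<Rightarrow> 'g grp \<Rightarrow> bool" where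
  "le_f le n gs B x y = le (fmap n gs B x) (fmap n gs B y)"

text \<open>CT_{f_1..f_n} Phi(f_1..f_n) is by definition the coefficient phi_0 of Phi.\<close>
definition CT_f :: "('g grp \<Rightarrow> 'k) \<Rightarrow> 'g \<Rightarrow> 'k" where
  "CT_f Phi = coeffx Phi (\<lambda>_. 0)"

end

theory Submission
  imports Defs "HOL-Library.Function_Algebras" "HOL-Library.Product_Plus" "HOL-Library.Infinite_Set"
begin

lemma wo_image:
  assumes "well_ordered_on (\<lambda>x y. le (h x) (h y)) S"
  shows "well_ordered_on le (h ` S)"
  unfolding well_ordered_on_def
proof (intro allI impI)
  fix T assume T: "T \<subseteq> h ` S" "T \<noteq> {}"
  let ?T = "{x\<in>S. h x \<in> T}"
  have "?T \<subseteq> S" "?T \<noteq> {}" using T by auto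
  then obtain m where "m \<in> ?T" "\<forall>t\<in>?T. le (h m) (h t)"
    using assms unfolding well_ordered_on_def by blast
  thus "\<exists>m\<in>T. \<forall>t\<in>T. le m t" using T by blast
qed

lemma wo_subset: "well_ordered_on le S \<Longrightarrow> T \<subseteq> S \<Longrightarrow> well_ordered_on le T"
  unfolding well_ordered_on_def by blast

primrec mbs :: "('b list list \<Rightarrow> (nat \<Rightarrow> 'b list) set) \<Rightarrow> nat \<Rightarrow> 'b list list" where
  "mbs E 0 = []"
| "mbs E (Suc k) = mbs E k @ [SOME L. \<exists>f\<in>E (mbs E k). f k = L \<and>
      length L = (LEAST l. \<exists>g\<in>E (mbs E k). length (g k) = l)]"

definition ssum :: "'a::plus set \<Rightarrow> 'a set \<Rightarrow> 'a set" where
  "ssum A B = {a + b | a b. a \<in> A \<and> b \<in> B}"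

locale oag =
  fixes C :: "'a::ab_group_add set" and le :: "'a \<Rightarrow> 'a \<Rightarrow> bool"
  assumes zC: "0 \<in> C" and addC: "x \<in> C \<Longrightarrow> y \<in> C \<Longrightarrow> x + y \<in> C"
    and negC: "x \<in> C \<Longrightarrow> - x \<in> C"
    and refl: "a \<in> C \<Longrightarrow> le a a"
    and antisym: "a \<in> C \<Longrightarrow> b \<in> C \<Longrightarrow> le a b \<Longrightarrow> le b a \<Longrightarrow> a = b"
    and trans: "a \<in> C \<Longrightarrow> b \<in> C \<Longrightarrow> c \<in> C \<Longrightarrow> le a b \<Longrightarrow> le b c \<Longrightarrow> le a c"
    and total: "a \<in> C \<Longrightarrow> b \<in> C \<Longrightarrow> le a b \<or> le b a"
    and mono: "a \<in> C \<Longrightarrow> b \<in> C \<Longrightarrow> c \<in> C \<Longrightarrow> le a b \<Longrightarrow> le (a + c) (b + c)"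
begin

definition lt where "lt a b \<longleftrightarrow> le a b \<and> a \<noteq> b"

lemma diffC: "x \<in> C \<Longrightarrow> y \<in> C \<Longrightarrow> x - y \<in> C"
  using addC negC by (metis diff_conv_add_uminus)

lemma mono_iff: "a \<in> C \<Longrightarrow> b \<in> C \<Longrightarrow> c \<in> C \<Longrightarrow> le (a + c) (b + c) \<longleftrightarrow> le a b"
  using mono[of "a+c" "b+c" "-c"] mono[of a b c] addC negC by auto

lemma mono_iff_l: "a \<in> C \<Longrightarrow> b \<in> C \<Longrightarrow> c \<in> C \<Longrightarrow> le (c + a) (c + b) \<longleftrightarrow> le a b"
  using mono_iff by (simp add: add.commute)

lemma lt_iff_not_le: "a \<in> C \<Longrightarrow> b \<in> C \<Longrightarrow> lt a b \<longleftrightarrow> \<not> le b a"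
  unfolding lt_def using total antisym refl by metis

lemma lt_trans: "a \<in> C \<Longrightarrow> b \<in> C \<Longrightarrow> c \<in> C \<Longrightarrow> lt a b \<Longrightarrow> lt b c \<Longrightarrow> lt a c"
  unfolding lt_def using trans antisym by metis

lemma lt_le_trans: "a \<in> C \<Longrightarrow> b \<in> C \<Longrightarrow> c \<in> C \<Longrightarrow> lt a b \<Longrightarrow> le b c \<Longrightarrow> lt a c"
  unfolding lt_def using trans antisym by metis

lemma le_lt_trans: "a \<in> C \<Longrightarrow> b \<in> C \<Longrightarrow> c \<in> C \<Longrightarrow> le a b \<Longrightarrow> lt b c \<Longrightarrow> lt a c"
  unfolding lt_def using trans antisym by metis

lemma add_mono2: "a \<in> C \<Longrightarrow> b \<in> C \<Longrightarrow> c \<in> C \<Longrightarrow> d \<in> C \<Longrightarrow> le a b \<Longrightarrow> le c d \<Longrightarrow> le (a + c) (b + d)"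
proof -
  assume C: "a \<in> C" "b \<in> C" "c \<in> C" "d \<in> C" and l: "le a b" "le c d"
  have "le (a + c) (b + c)" using mono C l by blast
  moreover have "le (b + c) (b + d)" using mono_iff_l C l by blast
  ultimately show ?thesis using trans addC C by blast
qed

lemma add_lt_le: "a \<in> C \<Longrightarrow> b \<in> C \<Longrightarrow> c \<in> C \<Longrightarrow> d \<in> C \<Longrightarrow> lt a b \<Longrightarrow> le c d \<Longrightarrow> lt (a + c) (b + d)"
proof -
  assume C: "a \<in> C" "b \<in> C" "c \<in> C" "d \<in> C" and l: "lt a b" "le c d"
  have le1: "le (a + c) (b + d)" using add_mono2 C l unfolding lt_def by blast
  have "a + c \<noteq> b + d"
  proof
    assume e: "a + c = b + d"
    have "le (a + c) (b + c)" using mono C l unfolding lt_def by blast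
    then have "le (b + d) (b + c)" using e by simp
    then have "le d c" using mono_iff_l C by blast
    then have "c = d" using antisym C l by blast
    then show False using e l unfolding lt_def by simp
  qed
  then show ?thesis using le1 unfolding lt_def by blast
qed

lemma add_le_lt: "a \<in> C \<Longrightarrow> b \<in> C \<Longrightarrow> c \<in> C \<Longrightarrow> d \<in> C \<Longrightarrow> le a b \<Longrightarrow> lt c d \<Longrightarrow> lt (a + c) (b + d)"
  using add_lt_le[of c d a b] by (simp add: add.commute)

lemma chain_lt:
  assumes "\<forall>i. f i \<in> C" "\<forall>i. lt (f (Suc i)) (f i)" "i < j"
  shows "lt (f j) (f i)"
  using assms(3)
proof (induction j)
  case 0 then show ?case by simp
next
  case (Suc j)
  show ?case
  proof (cases "i = j")
    case True then show ?thesis using assms by simp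
  next
    case False
    then have "lt (f j) (f i)" using Suc by simp
    then show ?thesis using lt_trans assms by blast
  qed
qed

lemma chain_le:
  assumes "\<forall>i. f i \<in> C" "\<forall>i. le (f i) (f (Suc i))" "i \<le> j"
  shows "le (f i) (f j)"
  using assms(3)
proof (induction j)
  case 0 then show ?case using refl assms by simp
next
  case (Suc j)
  show ?case
  proof (cases "i = Suc j")
    case True then show ?thesis using assms refl by simp
  next
    case False
    then have "le (f i) (f j)" using Suc by simp
    then show ?thesis using trans assms by blast
  qed
qed

lemma wo_seq:
  assumes "S \<subseteq> C"
  shows "well_ordered_on le S \<longleftrightarrow> \<not> (\<exists>f. \<forall>i. f i \<in> S \<and> lt (f (Suc i)) (f i))"
proof
  assume wo: "well_ordered_on le S"
  show "\<not> (\<exists>f. \<forall>i. f i \<in> S \<and> lt (f (Suc i)) (f i))"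
  proof
    assume "\<exists>f. \<forall>i. f i \<in> S \<and> lt (f (Suc i)) (f i)"
    then obtain f where f: "\<forall>i. f i \<in> S \<and> lt (f (Suc i)) (f i)" by blast
    have "range f \<subseteq> S" "range f \<noteq> {}" using f by auto
    then obtain m where "m \<in> range f" "\<forall>t\<in>range f. le m t" using wo
      unfolding well_ordered_on_def by blast
    then obtain i where "le (f i) (f (Suc i))" by auto
    then show False using f assms lt_iff_not_le by blast
  qed
next
  assume nd: "\<not> (\<exists>f. \<forall>i. f i \<in> S \<and> lt (f (Suc i)) (f i))"
  show "well_ordered_on le S"
    unfolding well_ordered_on_def
  proof (intro allI impI, rule ccontr)
    fix T assume T: "T \<subseteq> S" "T \<noteq> {}" "\<not> (\<exists>m\<in>T. \<forall>t\<in>T. le m t)"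
    have "\<forall>x\<in>T. \<exists>y\<in>T. lt y x"
      using T assms lt_iff_not_le by blast
    then obtain g where g: "\<forall>x\<in>T. g x \<in> T \<and> lt (g x) x" by metis
    obtain t0 where t0: "t0 \<in> T" using T by blast
    define f where "f i = (g ^^ i) t0" for i
    have fT: "f i \<in> T" for i by (induction i) (auto simp: f_def t0 g)
    have "\<forall>i. f i \<in> S \<and> lt (f (Suc i)) (f i)"
      using fT g T by (auto simp: f_def)
    then show False using nd by blast
  qed
qed

lemma wo_subseq:
  fixes f :: "nat \<Rightarrow> 'a"
  assumes S: "S \<subseteq> C" "well_ordered_on le S" and f: "\<forall>i. f i \<in> S"
  shows "\<exists>r::nat\<Rightarrow>nat. strict_mono r \<and> (\<forall>i j. i \<le> j \<longrightarrow> le (f (r i)) (f (r j)))"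
proof -
  have ex: "\<exists>j. j \<ge> m \<and> (\<forall>j'\<ge>m. le (f j) (f j'))" for m
  proof -
    have "f ` {m..} \<subseteq> S" "f ` {m..} \<noteq> {}" using f by auto
    then obtain x where "x \<in> f ` {m..}" "\<forall>t\<in>f ` {m..}. le x t"
      using S unfolding well_ordered_on_def by blast
    then show ?thesis by auto
  qed
  define tm where "tm (m::nat) = (SOME j::nat. j \<ge> m \<and> (\<forall>j'\<ge>m. le (f j) (f j')))" for m
  have tm: "tm m \<ge> m \<and> (\<forall>j'\<ge>m. le (f (tm m)) (f j'))" for m
    unfolding tm_def by (rule someI_ex[OF ex])
  define r where "r = rec_nat (tm 0) (\<lambda>k p. tm (Suc p))"
  have r0: "r 0 = tm 0" and rS: "r (Suc k) = tm (Suc (r k))" for k by (simp_all add: r_def)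
  have gt: "r k < r (Suc k)" for k
    using tm[of "Suc (r k)"] rS[of k] by simp
  have sm: "strict_mono r"
    unfolding strict_mono_Suc_iff using gt by blast
  have tl: "\<forall>j'>r k. le (f (r k)) (f j')" for k
  proof (cases k)
    case 0 then show ?thesis using tm[of 0] r0 by simp
  next
    case (Suc k')
    then show ?thesis using tm[of "Suc (r k')"] rS[of k'] by (simp add: Suc_le_eq less_imp_le)
  qed
  have cons: "\<forall>k. le (f (r k)) (f (r (Suc k)))"
    using tl gt by blast
  have fC: "\<forall>i. f (r i) \<in> C" using f S by blast
  have "\<forall>i j. i \<le> j \<longrightarrow> le (f (r i)) (f (r j))"
    using chain_le[OF fC cons] by simp
  then show ?thesis using sm by (intro exI[of _ r]) simp
qed

lemma wo_union: "well_ordered_on le A \<Longrightarrow> well_ordered_on le B \<Longrightarrow> A \<subseteq> C \<Longrightarrow> B \<subseteq> C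
   \<Longrightarrow> well_ordered_on le (A \<union> B)"
  unfolding well_ordered_on_def
proof (intro allI impI)
  fix T assume a: "\<forall>T\<subseteq>A. T \<noteq> {} \<longrightarrow> (\<exists>m\<in>T. \<forall>t\<in>T. le m t)"
    and b: "\<forall>T\<subseteq>B. T \<noteq> {} \<longrightarrow> (\<exists>m\<in>T. \<forall>t\<in>T. le m t)"
    and C: "A \<subseteq> C" "B \<subseteq> C" and T: "T \<subseteq> A \<union> B" "T \<noteq> {}"
  show "\<exists>m\<in>T. \<forall>t\<in>T. le m t"
  proof (cases "T \<inter> A = {}")
    case True
    then show ?thesis using b[rule_format, of T] T by blast
  next
    case nA: False
    obtain ma where ma: "ma \<in> T \<inter> A" "\<forall>t\<in>T \<inter> A. le ma t" using a nA by (meson inf_le2)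
    show ?thesis
    proof (cases "T \<inter> B = {}")
      case True
      then show ?thesis using ma T by blast
    next
      case False
      obtain mb where mb: "mb \<in> T \<inter> B" "\<forall>t\<in>T \<inter> B. le mb t" using b False by (meson inf_le2)
      have "ma \<in> C" "mb \<in> C" using ma mb C by auto
      then consider "le ma mb" | "le mb ma" using total by blast
      then show ?thesis
      proof cases
        case 1
        have "le ma t" if "t \<in> T" for t
        proof (cases "t \<in> A")
          case True then show ?thesis using ma that by blast
        next
          case False
          then have "t \<in> B" using T that by blast
          then show ?thesis using trans[of ma mb t] 1 mb that C `ma \<in> C` `mb \<in> C` by blast
        qed
        then have "\<forall>t\<in>T. le ma t" by blast
        then show ?thesis using ma by blast
      next
        case 2
        have "le mb t" if "t \<in> T" for t
        proof (cases "t \<in> B")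
          case True then show ?thesis using mb that by blast
        next
          case False
          then have "t \<in> A" using T that by blast
          then show ?thesis using trans[of mb ma t] 2 ma that C `ma \<in> C` `mb \<in> C` by blast
        qed
        then have "\<forall>t\<in>T. le mb t" by blast
        then show ?thesis using mb by blast
      qed
    qed
  qed
qed

lemma wo_UN: "(\<And>i. i < (n::nat) \<Longrightarrow> well_ordered_on le (A i) \<and> A i \<subseteq> C) \<Longrightarrow> well_ordered_on le (\<Union>i<n. A i)"
proof (induction n)
  case 0 then show ?case by (simp add: well_ordered_on_def)
next
  case (Suc n)
  have eq: "(\<Union>i<Suc n. A i) = (\<Union>i<n. A i) \<union> A n" by (auto simp: lessThan_Suc)
  have c1: "(\<Union>i<n. A i) \<subseteq> C" proof (rule UN_least) fix i assume "i \<in> {..<n}" then show "A i \<subseteq> C" using Suc.prems[of i] by simp qed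
  have w1: "well_ordered_on le (\<Union>i<n. A i)" using Suc.IH Suc.prems by simp
  have w2: "well_ordered_on le (A n)" and c2: "A n \<subseteq> C" using Suc.prems by auto
  show ?case unfolding eq by (rule wo_union[OF w1 w2 c1 c2])
qed

lemma finite_pairs:
  assumes A: "A \<subseteq> C" "well_ordered_on le A" and B: "B \<subseteq> C" "well_ordered_on le B"
  shows "finite {(a, b). a \<in> A \<and> b \<in> B \<and> a + b = c}"
proof (rule ccontr)
  assume "infinite {(a, b). a \<in> A \<and> b \<in> B \<and> a + b = c}"
  then have "\<exists>f :: nat \<Rightarrow> _. inj f \<and> range f \<subseteq> {(a, b). a \<in> A \<and> b \<in> B \<and> a + b = c}"
    by (simp only: infinite_iff_countable_subset)
  then obtain f :: "nat \<Rightarrow> _" where f: "inj f" "range f \<subseteq> {(a, b). a \<in> A \<and> b \<in> B \<and> a + b = c}"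
    by blast
  have fi: "f i \<in> {(a, b). a \<in> A \<and> b \<in> B \<and> a + b = c}" for i by (rule subsetD[OF f(2) rangeI])
  have fA: "\<forall>i. fst (f i) \<in> A" and fB: "\<forall>i. snd (f i) \<in> B" and fc: "\<forall>i. fst (f i) + snd (f i) = c"
    using fi by (auto simp: case_prod_beta)
  obtain r :: "nat \<Rightarrow> nat" where r: "strict_mono r" "\<forall>i j. i \<le> j \<longrightarrow> le (fst (f (r i))) (fst (f (r j)))"
    using wo_subseq[OF A fA] by blast
  have "lt (snd (f (r (Suc i)))) (snd (f (r i)))" for i
  proof -
    let ?a = "fst (f (r i))" and ?a' = "fst (f (r (Suc i)))"
    let ?b = "snd (f (r i))" and ?b' = "snd (f (r (Suc i)))"
    have "r i \<noteq> r (Suc i)" using r(1) by (simp add: strict_mono_eq)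
    then have ne: "f (r i) \<noteq> f (r (Suc i))" using f(1) by (simp add: inj_eq)
    have "?a \<noteq> ?a'"
    proof
      assume "?a = ?a'"
      moreover have "?a + ?b = ?a' + ?b'" using fc by simp
      ultimately have "?b = ?b'" by simp
      then show False using ne `?a = ?a'` by (simp add: prod_eq_iff)
    qed
    moreover have "le ?a ?a'" using r by simp
    moreover have C: "?a \<in> C" "?a' \<in> C" "?b \<in> C" "?b' \<in> C" using fA fB A B by auto
    ultimately have "lt ?a ?a'" unfolding lt_def by simp
    have "\<not> le ?b ?b'"
    proof
      assume "le ?b ?b'"
      then have "lt (?a + ?b) (?a' + ?b')" using add_lt_le[of ?a ?a' ?b ?b'] C `lt ?a ?a'` by blast
      then show False using fc unfolding lt_def by simp
    qed
    then show ?thesis using lt_iff_not_le C by blast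
  qed
  then have "\<forall>i. snd (f (r i)) \<in> B \<and> lt (snd (f (r (Suc i)))) (snd (f (r i)))" using fB by blast
  then have "\<exists>g. \<forall>i. g i \<in> B \<and> lt (g (Suc i)) (g i)" by (rule exI[of _ "\<lambda>i. snd (f (r i))"])
  then show False using wo_seq[OF B(1)] B(2) by simp
qed

lemma ssumC: "A \<subseteq> C \<Longrightarrow> B \<subseteq> C \<Longrightarrow> ssum A B \<subseteq> C"
  unfolding ssum_def using addC by auto

lemma wo_ssum:
  assumes A: "A \<subseteq> C" "well_ordered_on le A" and B: "B \<subseteq> C" "well_ordered_on le B"
  shows "well_ordered_on le (ssum A B)"
proof -
  have "\<not> (\<exists>f. \<forall>i. f i \<in> ssum A B \<and> lt (f (Suc i)) (f i))"
  proof
    assume "\<exists>f. \<forall>i. f i \<in> ssum A B \<and> lt (f (Suc i)) (f i)"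
    then obtain f where f: "\<forall>i. f i \<in> ssum A B \<and> lt (f (Suc i)) (f i)" by blast
    have "\<forall>i. \<exists>a b. a \<in> A \<and> b \<in> B \<and> f i = a + b" using f unfolding ssum_def by blast
    then obtain a b where ab: "\<forall>i. a i \<in> A \<and> b i \<in> B \<and> f i = a i + b i" by metis
    obtain r :: "nat \<Rightarrow> nat" where r: "strict_mono r" "\<forall>i j. i \<le> j \<longrightarrow> le (a (r i)) (a (r j))"
      using wo_subseq[OF A, of a] ab by blast
    have fC: "\<forall>i. f i \<in> C" using f ssumC[OF A(1) B(1)] by blast
    have "lt (b (r (Suc i))) (b (r i))" for i
    proof -
      have "lt (f (r (Suc i))) (f (r i))"
        using chain_lt[OF fC] f r(1) by (simp add: strict_mono_def)
      moreover have "le (a (r i)) (a (r (Suc i)))" using r by simp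
      moreover have C: "a (r i) \<in> C" "a (r (Suc i)) \<in> C" "b (r i) \<in> C" "b (r (Suc i)) \<in> C"
        using ab A B by auto
      ultimately show ?thesis
      proof -
        assume l1: "lt (f (r (Suc i))) (f (r i))" and l2: "le (a (r i)) (a (r (Suc i)))"
        show ?thesis
        proof (rule ccontr)
          assume "\<not> lt (b (r (Suc i))) (b (r i))"
          then have "le (b (r i)) (b (r (Suc i)))" using lt_iff_not_le C by blast
          then have "le (f (r i)) (f (r (Suc i)))"
            using add_mono2[OF C(1) C(2) C(3) C(4) l2] ab by simp
          then show False using l1 lt_iff_not_le fC by blast
        qed
      qed
    qed
    then have "\<forall>i. b (r i) \<in> B \<and> lt (b (r (Suc i))) (b (r i))" using ab by blast
    then have "\<exists>g. \<forall>i. g i \<in> B \<and> lt (g (Suc i)) (g i)" by (rule exI[of _ "\<lambda>i. b (r i)"])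
    then show False using wo_seq[OF B(1)] B(2) by simp
  qed
  then show ?thesis using wo_seq ssumC A B by blast
qed

end

context oag begin

definition sums :: "'a set \<Rightarrow> 'a set" where
  "sums S = {sum_list L | L. L \<in> lists S}"

definition RR :: "'a list \<Rightarrow> 'a list \<Rightarrow> bool" where
  "RR L L' \<longleftrightarrow> lt (sum_list L') (sum_list L) \<or> (sum_list L' = sum_list L \<and> length L < length L')"

lemma sum_listC: "S \<subseteq> C \<Longrightarrow> L \<in> lists S \<Longrightarrow> sum_list L \<in> C"
  by (induction L) (auto simp: zC addC)

lemma sumsC: "S \<subseteq> C \<Longrightarrow> sums S \<subseteq> C"
  unfolding sums_def using sum_listC by blast

lemma sum_list_pos:
  assumes S: "S \<subseteq> C" "\<forall>s\<in>S. lt 0 s" and L: "L \<in> lists S"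
  shows "le 0 (sum_list L) \<and> (L \<noteq> [] \<longrightarrow> lt 0 (sum_list L))"
  using L
proof (induction L)
  case Nil then show ?case using refl zC by simp
next
  case (Cons s L)
  then have "lt 0 s" "le 0 (sum_list L)" "s \<in> C" "sum_list L \<in> C" using S sum_listC by auto
  then have "lt (0 + 0) (s + sum_list L)" using add_lt_le zC by blast
  then show ?case unfolding lt_def by simp
qed

lemma RR_down:
  assumes "S \<subseteq> C" "L \<in> lists S" "L' \<in> lists S" "L'' \<in> lists S" "RR L L'"
    "lt (sum_list L'') (sum_list L')"
  shows "RR L L''"
proof -
  have C: "sum_list L \<in> C" "sum_list L' \<in> C" "sum_list L'' \<in> C" using assms sum_listC by auto
  have "le (sum_list L') (sum_list L)" using assms(5) refl C unfolding RR_def lt_def by auto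
  then have "lt (sum_list L'') (sum_list L)" using lt_le_trans C assms(6) by blast
  then show ?thesis unfolding RR_def by blast
qed

lemma RR_rem:
  assumes C: "a1 \<in> C" "a2 \<in> C" "t1 \<in> C" "t2 \<in> C" and a: "le a1 a2" and n1: "n1 \<ge> (1::nat)"
    and R: "lt (a2 + t2) (a1 + t1) \<or> (a2 + t2 = a1 + t1 \<and> n1 < n2)"
  shows "lt t2 t1 \<or> (t2 = t1 \<and> n1 - 1 < n2 - 1)"
proof (cases "lt (a2 + t2) (a1 + t1)")
  case True
  show ?thesis
  proof (rule ccontr)
    assume "\<not> ?thesis"
    then have "le t1 t2" using lt_iff_not_le C by blast
    then have "le (a1 + t1) (a2 + t2)" using add_mono2 C a by blast
    then show False using True lt_iff_not_le C addC by blast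
  qed
next
  case False
  then have e: "a2 + t2 = a1 + t1" "n1 < n2" using R by auto
  show ?thesis
  proof (cases "lt t2 t1")
    case True then show ?thesis by simp
  next
    case False
    then have "le t1 t2" using lt_iff_not_le C by blast
    show ?thesis
    proof (cases "t1 = t2")
      case True
      have "n1 - 1 < n2 - 1" using e n1 by linarith
      then show ?thesis using True by simp
    next
      case False
      then have "lt t1 t2" using `le t1 t2` unfolding lt_def by simp
      then have "lt (a1 + t1) (a2 + t2)" using add_le_lt C a by blast
      then show ?thesis using e unfolding lt_def by simp
    qed
  qed
qed

lemma neumann_core:
  assumes S: "S \<subseteq> C" "well_ordered_on le S" "\<forall>s\<in>S. lt 0 s"
  shows "\<not> (\<exists>f::nat \<Rightarrow> 'a list. (\<forall>i. f i \<in> lists S) \<and> (\<forall>i j. i < j \<longrightarrow> RR (f i) (f j)))"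
proof
  define bad where "bad f \<longleftrightarrow> (\<forall>i. f i \<in> lists S) \<and> (\<forall>i j. i < j \<longrightarrow> RR (f i) (f j))"
    for f :: "nat \<Rightarrow> 'a list"
  assume "\<exists>f::nat \<Rightarrow> 'a list. (\<forall>i. f i \<in> lists S) \<and> (\<forall>i j. i < j \<longrightarrow> RR (f i) (f j))"
  then have ex0: "\<exists>f. bad f" unfolding bad_def by blast
  define E where "E pre = {f. bad f \<and> (\<forall>i<length pre. f i = pre ! i)}" for pre
  have Emem: "f \<in> E pre \<longleftrightarrow> bad f \<and> (\<forall>i<length pre. f i = pre ! i)" for f pre
    by (simp add: E_def)
  define ch where "ch pre k = (SOME L. \<exists>f\<in>E pre. f k = L \<and>
      length L = (LEAST l. \<exists>g\<in>E pre. length (g k) = l))" for pre and k :: nat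
  have mbS: "mbs E (Suc k) = mbs E k @ [ch (mbs E k) k]" for k
    by (simp add: ch_def)
  have chp: "\<exists>f\<in>E pre. f k = ch pre k \<and> length (ch pre k) = (LEAST l. \<exists>g\<in>E pre. length (g k) = l)"
    if "E pre \<noteq> {}" for pre k
  proof -
    from that obtain g0 where "g0 \<in> E pre" by blast
    then have "\<exists>l. \<exists>g\<in>E pre. length (g k) = l" by blast
    then have "\<exists>g\<in>E pre. length (g k) = (LEAST l. \<exists>g\<in>E pre. length (g k) = l)"
      by (rule LeastI_ex)
    then have "\<exists>L. \<exists>f\<in>E pre. f k = L \<and> length L = (LEAST l. \<exists>g\<in>E pre. length (g k) = l)"
      by blast
    then show ?thesis unfolding ch_def by (rule someI_ex)
  qed
  have inv: "length (mbs E k) = k \<and> E (mbs E k) \<noteq> {}" for k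
  proof (induction k)
    case 0
    then show ?case using ex0 Emem by auto
  next
    case (Suc k)
    then obtain f where f: "f \<in> E (mbs E k)" "f k = ch (mbs E k) k" using chp by blast
    have "f \<in> E (mbs E (Suc k))"
      using f Suc.IH unfolding mbS Emem by (auto simp: nth_append less_Suc_eq)
    then show ?case using Suc.IH mbS by auto
  qed
  define m where "m i = mbs E (Suc i) ! i" for i
  have mbm: "i < k \<Longrightarrow> mbs E k ! i = m i" for i k
  proof (induction k)
    case 0 then show ?case by simp
  next
    case (Suc k)
    show ?case
    proof (cases "i < k")
      case True then show ?thesis using Suc inv[of k] by (simp add: mbS nth_append)
    next
      case False then have "i = k" using Suc by simp
      then show ?thesis by (simp add: m_def)
    qed
  qed
  have ext: "\<exists>f. bad f \<and> (\<forall>i<k. f i = m i)" for k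
  proof -
    obtain f where "f \<in> E (mbs E k)" using inv by blast
    then show ?thesis unfolding Emem using inv[of k] mbm by auto
  qed
  have mbad: "bad m"
  proof -
    have "m i \<in> lists S" for i
    proof -
      obtain f where "bad f" "\<forall>i'<Suc i. f i' = m i'" using ext by blast
      then show ?thesis unfolding bad_def by (metis lessI)
    qed
    moreover have "RR (m i) (m j)" if "i < j" for i j
    proof -
      obtain f where "bad f" "\<forall>i'<Suc j. f i' = m i'" using ext by blast
      then show ?thesis unfolding bad_def using that by (metis less_SucI lessI)
    qed
    ultimately show ?thesis unfolding bad_def by blast
  qed
  have mmin: "length (m k) \<le> length (g k)" if "bad g" "\<forall>i<k. g i = m i" for g k
  proof -
    have mk: "m k = ch (mbs E k) k" unfolding m_def mbS using inv[of k] by (simp add: nth_append)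
    have gE: "g \<in> E (mbs E k)" unfolding Emem using that inv[of k] mbm by auto
    obtain f where "length (ch (mbs E k) k) = (LEAST l. \<exists>g\<in>E (mbs E k). length (g k) = l)"
      using chp inv by blast
    moreover have "(LEAST l. \<exists>g\<in>E (mbs E k). length (g k) = l) \<le> length (g k)"
      using gE by (intro Least_le) blast
    ultimately show ?thesis using mk by simp
  qed
  have nonempty: "f i \<noteq> []" if "bad f" for f i
  proof
    assume e: "f i = []"
    have "RR (f i) (f (Suc i))" using that unfolding bad_def by simp
    moreover have "f (Suc i) \<in> lists S" using that unfolding bad_def by simp
    moreover note sum_list_pos[OF S(1) S(3) this]
    ultimately show False using e unfolding RR_def lt_def
      using antisym zC sum_listC[OF S(1)] by auto
  qed
  have mS: "m k \<in> lists S" for k using mbad unfolding bad_def by blast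
  define \<alpha> where "\<alpha> k = hd (m k)" for k
  define m' where "m' k = tl (m k)" for k
  have mcons: "m k = \<alpha> k # m' k" for k
    unfolding \<alpha>_def m'_def using nonempty[OF mbad, of k] by simp
  have \<alpha>: "\<alpha> k \<in> set (m k)" for k using mcons[of k] by (metis list.set_intros(1))
  have m'S: "m' k \<in> lists S" for k using mS[of k] mcons[of k] by (metis Cons_in_lists_iff)
  have sm: "sum_list (m k) = \<alpha> k + sum_list (m' k)" for k
    using mcons[of k] by (metis sum_list.Cons)
  have lm: "length (m' k) = length (m k) - 1" "length (m k) \<ge> 1" for k
    by (simp_all add: mcons[of k])
  have \<alpha>S: "\<alpha> k \<in> S" for k using \<alpha> mS by blast
  have \<alpha>C: "\<alpha> k \<in> C" for k using \<alpha>S S by blast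
  have mC: "sum_list (m k) \<in> C" "sum_list (m' k) \<in> C" for k using sum_listC[OF S(1)] mS m'S by auto
  have m'lt: "lt (sum_list (m' k)) (sum_list (m k))" for k
  proof -
    have "lt (0 + sum_list (m' k)) (\<alpha> k + sum_list (m' k))"
      using add_lt_le[of 0 "\<alpha> k" "sum_list (m' k)" "sum_list (m' k)"] zC \<alpha>C mC refl S(3) \<alpha>S by blast
    then show ?thesis using sm by simp
  qed
  obtain r :: "nat \<Rightarrow> nat" where r: "strict_mono r" "\<forall>i j. i \<le> j \<longrightarrow> le (\<alpha> (r i)) (\<alpha> (r j))"
    using wo_subseq[OF S(1) S(2), of \<alpha>] \<alpha>S by blast
  define g where "g i = (if i < r 0 then m i else m' (r (i - r 0)))" for i
  have gS: "g i \<in> lists S" for i unfolding g_def using mS m'S by simp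
  have gR: "RR (g i) (g j)" if ij: "i < j" for i j
  proof (cases "j < r 0")
    case True
    then show ?thesis using ij mbad unfolding g_def bad_def by simp
  next
    case jr: False
    show ?thesis
    proof (cases "i < r 0")
      case True
      let ?p = "r (j - r 0)"
      have "r 0 \<le> ?p" using r(1) by (simp add: strict_mono_less_eq)
      then have "i < ?p" using True by simp
      then have "RR (m i) (m ?p)" using mbad unfolding bad_def by blast
      then have "RR (m i) (m' ?p)" using RR_down[OF S(1) mS mS m'S] m'lt by blast
      then show ?thesis using True jr unfolding g_def by simp
    next
      case False
      let ?p = "r (i - r 0)" and ?q = "r (j - r 0)"
      have pq: "?p < ?q" using r(1) False jr ij by (simp add: strict_mono_less)
      then have R: "RR (m ?p) (m ?q)" using mbad unfolding bad_def by blast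
      have a: "le (\<alpha> ?p) (\<alpha> ?q)" using r(2) ij by simp
      have "lt (sum_list (m' ?q)) (sum_list (m' ?p)) \<or>
            (sum_list (m' ?q) = sum_list (m' ?p) \<and> length (m ?p) - 1 < length (m ?q) - 1)"
        using RR_rem[OF \<alpha>C[of ?p] \<alpha>C[of ?q] mC(2)[of ?p] mC(2)[of ?q] a lm(2)[of ?p], of "length (m ?q)"] R
        unfolding RR_def sm by blast
      then have "RR (m' ?p) (m' ?q)" unfolding RR_def lm(1) by blast
      then show ?thesis using False jr unfolding g_def by simp
    qed
  qed
  have "bad g" unfolding bad_def using gS gR by blast
  moreover have "\<forall>i<r 0. g i = m i" unfolding g_def by simp
  ultimately have "length (m (r 0)) \<le> length (g (r 0))" by (rule mmin)
  moreover have "g (r 0) = m' (r 0)" unfolding g_def by simp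
  ultimately show False using lm[of "r 0"] by simp
qed

lemma neumann_wo:
  assumes S: "S \<subseteq> C" "well_ordered_on le S" "\<forall>s\<in>S. lt 0 s"
  shows "well_ordered_on le (sums S)"
proof -
  have "\<not> (\<exists>f. \<forall>i. f i \<in> sums S \<and> lt (f (Suc i)) (f i))"
  proof
    assume "\<exists>f. \<forall>i. f i \<in> sums S \<and> lt (f (Suc i)) (f i)"
    then obtain f where f: "\<forall>i. f i \<in> sums S \<and> lt (f (Suc i)) (f i)" by blast
    have "\<forall>i. \<exists>L. L \<in> lists S \<and> f i = sum_list L" using f unfolding sums_def by blast
    then obtain L where L: "\<forall>i. L i \<in> lists S \<and> f i = sum_list (L i)" by metis
    have fC: "\<forall>i. f i \<in> C" using f sumsC[OF S(1)] by blast
    have fl: "\<forall>i. lt (f (Suc i)) (f i)" using f by blast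
    have "RR (L i) (L j)" if "i < j" for i j
      using chain_lt[OF fC fl that] L unfolding RR_def by simp
    then have "(\<forall>i. L i \<in> lists S) \<and> (\<forall>i j. i < j \<longrightarrow> RR (L i) (L j))" using L by blast
    then have "\<exists>f::nat \<Rightarrow> 'a list. (\<forall>i. f i \<in> lists S) \<and> (\<forall>i j. i < j \<longrightarrow> RR (f i) (f j))"
      by (rule exI[of _ L])
    then show False using neumann_core[OF S] by simp
  qed
  then show ?thesis using wo_seq[OF sumsC[OF S(1)]] by simp
qed

lemma neumann_fin_len:
  assumes S: "S \<subseteq> C" "well_ordered_on le S" "\<forall>s\<in>S. lt 0 s"
  shows "finite {L \<in> lists S. length L = k \<and> sum_list L = c}"
proof (induction k arbitrary: c)
  case 0
  have "{L \<in> lists S. length L = 0 \<and> sum_list L = c} \<subseteq> {[]}" by auto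
  then show ?case using finite_subset by blast
next
  case (Suc k)
  let ?P = "{(s, t). s \<in> S \<and> t \<in> sums S \<and> s + t = c}"
  have fP: "finite ?P" using finite_pairs[OF S(1) S(2) sumsC[OF S(1)] neumann_wo[OF S]] by simp
  have "{L \<in> lists S. length L = Suc k \<and> sum_list L = c} \<subseteq>
        (\<Union>p\<in>?P. (\<lambda>L. fst p # L) ` {L \<in> lists S. length L = k \<and> sum_list L = snd p})"
  proof
    fix L assume L: "L \<in> {L \<in> lists S. length L = Suc k \<and> sum_list L = c}"
    then obtain s L' where e: "L = s # L'" by (cases L) auto
    then have "(s, sum_list L') \<in> ?P" using L unfolding sums_def by auto
    moreover have "L \<in> (\<lambda>L. s # L) ` {L \<in> lists S. length L = k \<and> sum_list L = sum_list L'}"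
      using L e by auto
    ultimately show "L \<in> (\<Union>p\<in>?P. (\<lambda>L. fst p # L) ` {L \<in> lists S. length L = k \<and> sum_list L = snd p})"
      by force
  qed
  moreover have "finite (\<Union>p\<in>?P. (\<lambda>L. fst p # L) ` {L \<in> lists S. length L = k \<and> sum_list L = snd p})"
    using fP Suc.IH by blast
  ultimately show ?case using finite_subset by blast
qed

lemma neumann_fin:
  assumes S: "S \<subseteq> C" "well_ordered_on le S" "\<forall>s\<in>S. lt 0 s"
  shows "finite {L \<in> lists S. sum_list L = c}"
proof -
  let ?N = "{length L | L. L \<in> lists S \<and> sum_list L = c}"
  have fN: "finite ?N"
  proof (rule ccontr)
    assume "infinite ?N"
    then have "\<exists>r::nat\<Rightarrow>nat. strict_mono r \<and> (\<forall>k. r k \<in> ?N)" by (rule infinite_enumerate)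
    then obtain r :: "nat \<Rightarrow> nat" where r0: "strict_mono r \<and> (\<forall>k. r k \<in> ?N)" ..
    have r: "strict_mono r" "\<forall>k. r k \<in> ?N" using r0 by (rule conjunct1, rule conjunct2)
    have "\<forall>k. \<exists>L. L \<in> lists S \<and> sum_list L = c \<and> length L = r k"
    proof
      fix k show "\<exists>L. L \<in> lists S \<and> sum_list L = c \<and> length L = r k" using r(2)[rule_format, of k] unfolding mem_Collect_eq by metis
    qed
    then have "\<exists>L. \<forall>k. L k \<in> lists S \<and> sum_list (L k) = c \<and> length (L k) = r k" by (rule choice)
    then obtain L where L: "\<forall>k. L k \<in> lists S \<and> sum_list (L k) = c \<and> length (L k) = r k" by blast
    have "RR (L i) (L j)" if "i < j" for i j
    proof -
      have "r i < r j" using r(1) that by (simp add: strict_mono_less)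
      then show ?thesis using L unfolding RR_def by simp
    qed
    then have "(\<forall>i. L i \<in> lists S) \<and> (\<forall>i j. i < j \<longrightarrow> RR (L i) (L j))" using L by blast
    then have "\<exists>f::nat \<Rightarrow> 'a list. (\<forall>i. f i \<in> lists S) \<and> (\<forall>i j. i < j \<longrightarrow> RR (f i) (f j))"
      by (rule exI[of _ L])
    then show False using neumann_core[OF S] by simp
  qed
  have "{L \<in> lists S. sum_list L = c} \<subseteq> (\<Union>k\<in>?N. {L \<in> lists S. length L = k \<and> sum_list L = c})"
  proof
    fix L assume L: "L \<in> {L \<in> lists S. sum_list L = c}"
    then have "length L \<in> ?N" by auto
    then show "L \<in> (\<Union>k\<in>?N. {L \<in> lists S. length L = k \<and> sum_list L = c})" using L by auto
  qed
  moreover have "finite (\<Union>k\<in>?N. {L \<in> lists S. length L = k \<and> sum_list L = c})"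
    by (rule finite_UN_I[OF fN]) (rule neumann_fin_len[OF S])
  ultimately show ?thesis by (rule finite_subset)
qed

end

definition conv :: "('g::ab_group_add \<Rightarrow> 'k::field) \<Rightarrow> ('g \<Rightarrow> 'k) \<Rightarrow> 'g \<Rightarrow> 'k" where
  "conv a u g = (\<Sum>h\<in>{h. h \<in> supp a \<and> g - h \<in> supp u}. a h * u (g - h))"

definition delta :: "'g::ab_group_add \<Rightarrow> 'k::field" where
  "delta g = (if g = 0 then 1 else 0)"

lemma supp_iff: "x \<in> supp s \<longleftrightarrow> s x \<noteq> 0" by (simp add: supp_def)

lemma supp_delta: "supp (delta :: 'g::ab_group_add \<Rightarrow> 'k::field) = {0}"
  by (auto simp: supp_def delta_def)

lemma conv_supp: "supp (conv a u) \<subseteq> ssum (supp a) (supp u)"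
proof
  fix g assume "g \<in> supp (conv a u)"
  then have "{h. h \<in> supp a \<and> g - h \<in> supp u} \<noteq> {}" unfolding supp_iff conv_def by (metis sum.empty)
  then obtain h where "h \<in> supp a" "g - h \<in> supp u" by blast
  then show "g \<in> ssum (supp a) (supp u)" unfolding ssum_def by force
qed

lemma conv_delta_right: "conv a delta = a"
proof
  fix g
  have e: "{h. h \<in> supp a \<and> g - h \<in> supp delta} = (if a g = 0 then {} else {g})"
    by (auto simp: supp_delta supp_iff)
  show "conv a delta g = a g" unfolding conv_def e by (simp add: delta_def)
qed

lemma conv_delta_left: "conv delta u = u"
proof
  fix g
  have e: "{h. h \<in> supp delta \<and> g - h \<in> supp u} = (if u g = 0 then {} else {0})"
    by (auto simp: supp_delta supp_iff)
  show "conv delta u g = u g" unfolding conv_def e by (simp add: delta_def)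
qed

lemma conv_zero_right: "conv a (\<lambda>_. 0) = (\<lambda>_. 0)"
  unfolding conv_def supp_def by simp

lemma conv_superset:
  assumes "finite X" "{h. h \<in> supp a \<and> g - h \<in> supp u} \<subseteq> X"
  shows "conv a u g = (\<Sum>h\<in>X. a h * u (g - h))"
  unfolding conv_def
  by (rule sum.mono_neutral_left[OF assms]) (auto simp: supp_iff)

locale gser = oag "UNIV :: 'g::ab_group_add set" leg for leg
begin

lemma conv_fin:
  assumes "well_ordered_on leg A" "well_ordered_on leg B"
  shows "finite {h. h \<in> A \<and> g - h \<in> B}"
proof -
  have "finite {(x, y). x \<in> A \<and> y \<in> B \<and> x + y = g}"
    using finite_pairs assms by blast
  then have "finite (fst ` {(x, y). x \<in> A \<and> y \<in> B \<and> x + y = g})" by (rule finite_imageI)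
  moreover have "{h. h \<in> A \<and> g - h \<in> B} \<subseteq> fst ` {(x, y). x \<in> A \<and> y \<in> B \<and> x + y = g}"
  proof
    fix h assume "h \<in> {h. h \<in> A \<and> g - h \<in> B}"
    then have "(h, g - h) \<in> {(x, y). x \<in> A \<and> y \<in> B \<and> x + y = g}" by simp
    then show "h \<in> fst ` {(x, y). x \<in> A \<and> y \<in> B \<and> x + y = g}" by force
  qed
  ultimately show ?thesis by (rule finite_subset[rotated])
qed

lemma exists_min:
  assumes "well_ordered_on leg A" "A \<noteq> {}"
  shows "\<exists>m\<in>A. \<forall>x\<in>A. leg m x"
  using assms unfolding well_ordered_on_def by blast

lemma conv_cancel:
  fixes a w1 w2 :: "'g \<Rightarrow> 'k::field"
  assumes a: "a \<noteq> (\<lambda>_. 0)" "well_ordered_on leg (supp a)"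
    and w: "well_ordered_on leg (supp w1)" "well_ordered_on leg (supp w2)"
    and eq: "conv a w1 = conv a w2"
  shows "w1 = w2"
proof (rule ccontr)
  assume ne: "w1 \<noteq> w2"
  define d where "d x = w1 x - w2 x" for x
  have sd: "supp d \<subseteq> supp w1 \<union> supp w2" unfolding d_def supp_def by auto
  have wU: "well_ordered_on leg (supp w1 \<union> supp w2)" using wo_union w by blast
  have wd: "well_ordered_on leg (supp d)" using wo_subset[OF wU sd] .
  have cd: "conv a d g = 0" for g
  proof -
    let ?X = "{h. h \<in> supp a \<and> g - h \<in> supp w1 \<union> supp w2}"
    have fX: "finite ?X" using conv_fin[OF a(2) wU] .
    have "conv a d g = (\<Sum>h\<in>?X. a h * d (g - h))"
      by (rule conv_superset[OF fX]) (use sd in blast)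
    moreover have "conv a w1 g = (\<Sum>h\<in>?X. a h * w1 (g - h))"
      by (rule conv_superset[OF fX]) blast
    moreover have "conv a w2 g = (\<Sum>h\<in>?X. a h * w2 (g - h))"
      by (rule conv_superset[OF fX]) blast
    ultimately have "conv a d g = conv a w1 g - conv a w2 g"
      unfolding d_def by (simp add: right_diff_distrib sum_subtractf)
    then show ?thesis using eq by simp
  qed
  have "supp d \<noteq> {}" using ne unfolding d_def supp_def by auto
  then obtain m0 where m0: "m0 \<in> supp d" "\<forall>x\<in>supp d. leg m0 x" using exists_min wd by blast
  have "supp a \<noteq> {}" using a(1) unfolding supp_def by auto
  then obtain g0 where g0: "g0 \<in> supp a" "\<forall>x\<in>supp a. leg g0 x" using exists_min a(2) by blast
  have "{h. h \<in> supp a \<and> (g0 + m0) - h \<in> supp d} = {g0}"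
  proof (intro set_eqI iffI)
    fix h assume h: "h \<in> {h. h \<in> supp a \<and> (g0 + m0) - h \<in> supp d}"
    show "h \<in> {g0}"
    proof (rule ccontr)
      assume "h \<notin> {g0}"
      then have "lt g0 h" using g0 h unfolding lt_def by auto
      then have "lt (g0 + (m0 - h)) (h + (m0 - h))" using add_lt_le refl by blast
      then have "lt ((g0 + m0) - h) m0" by (simp add: algebra_simps)
      moreover have "leg m0 ((g0 + m0) - h)" using m0 h by blast
      ultimately show False using lt_iff_not_le by blast
    qed
  next
    fix h assume "h \<in> {g0}"
    then show "h \<in> {h. h \<in> supp a \<and> (g0 + m0) - h \<in> supp d}" using g0 m0 by simp
  qed
  then have "conv a d (g0 + m0) = a g0 * d m0" unfolding conv_def by simp
  moreover have "a g0 * d m0 \<noteq> 0" using g0 m0 unfolding supp_def by simp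
  ultimately show False using cd by simp
qed

end

context gser begin

lemma wo_single: "well_ordered_on leg {x}"
  unfolding well_ordered_on_def
proof (intro allI impI)
  fix T assume "T \<subseteq> {x}" "T \<noteq> {}"
  then have "T = {x}" by auto
  then show "\<exists>m\<in>T. \<forall>t\<in>T. leg m t" using refl by simp
qed

lemma init_exp_prop:
  assumes "a \<noteq> (\<lambda>_. 0)" "well_ordered_on leg (supp a)"
  shows "init_exp leg a \<in> supp a \<and> (\<forall>h\<in>supp a. leg (init_exp leg a) h)"
proof -
  have "supp a \<noteq> {}" using assms(1) unfolding supp_def by auto
  then obtain m where m: "m \<in> supp a" "\<forall>x\<in>supp a. leg m x" using exists_min assms(2) by blast
  have "\<exists>!g. g \<in> supp a \<and> (\<forall>h\<in>supp a. leg g h)"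
  proof (rule ex1I[of _ m])
    show "m \<in> supp a \<and> (\<forall>h\<in>supp a. leg m h)" using m by blast
  next
    fix g assume "g \<in> supp a \<and> (\<forall>h\<in>supp a. leg g h)"
    then show "g = m" using m antisym by blast
  qed
  then show ?thesis unfolding init_exp_def by (rule theI')
qed

lemma sums_mono: "S \<subseteq> S' \<Longrightarrow> sums S \<subseteq> sums S'"
  unfolding sums_def by (auto dest: lists_mono[THEN subsetD])

lemma sums_add: "x \<in> sums S \<Longrightarrow> y \<in> sums S \<Longrightarrow> x + y \<in> sums S"
proof -
  assume "x \<in> sums S" "y \<in> sums S"
  then obtain L1 L2 where "L1 \<in> lists S" "L2 \<in> lists S" "x = sum_list L1" "y = sum_list L2"
    unfolding sums_def by blast
  then have "L1 @ L2 \<in> lists S" "x + y = sum_list (L1 @ L2)" by simp_all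
  then show ?thesis unfolding sums_def by blast
qed

lemma sums_zero: "0 \<in> sums S"
proof -
  have "[] \<in> lists S" "0 = sum_list []" by simp_all
  then show ?thesis unfolding sums_def by blast
qed

lemma sums_single: "s \<in> S \<Longrightarrow> s \<in> sums S"
proof -
  assume "s \<in> S"
  then have "[s] \<in> lists S" "s = sum_list [s]" by simp_all
  then show ?thesis unfolding sums_def by blast
qed

lemma S_props:
  assumes a: "a \<noteq> (\<lambda>_. 0)" "well_ordered_on leg (supp a)"
  defines "g0 \<equiv> init_exp leg a"
  shows "well_ordered_on leg {s. s \<noteq> 0 \<and> g0 + s \<in> supp a} \<and> (\<forall>s\<in>{s. s \<noteq> 0 \<and> g0 + s \<in> supp a}. lt 0 s)"
proof
  have g0: "g0 \<in> supp a" "\<forall>h\<in>supp a. leg g0 h" using init_exp_prop[OF a] unfolding g0_def by auto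
  have "{s. s \<noteq> 0 \<and> g0 + s \<in> supp a} \<subseteq> ssum (supp a) {- g0}"
  proof
    fix s assume "s \<in> {s. s \<noteq> 0 \<and> g0 + s \<in> supp a}"
    then have "g0 + s \<in> supp a" "s = (g0 + s) + (- g0)" by (simp_all add: algebra_simps)
    then show "s \<in> ssum (supp a) {- g0}" unfolding ssum_def by blast
  qed
  moreover have "well_ordered_on leg (ssum (supp a) {- g0})"
    using wo_ssum[OF _ a(2) _ wo_single] by simp
  ultimately show "well_ordered_on leg {s. s \<noteq> 0 \<and> g0 + s \<in> supp a}" using wo_subset by blast
  show "\<forall>s\<in>{s. s \<noteq> 0 \<and> g0 + s \<in> supp a}. lt 0 s"
  proof
    fix s assume s: "s \<in> {s. s \<noteq> 0 \<and> g0 + s \<in> supp a}"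
    then have "leg (g0 + 0) (g0 + s)" using g0 by simp
    then have "leg 0 s" using mono_iff_l by blast
    then show "lt 0 s" using s unfolding lt_def by simp
  qed
qed

lemma inverse_exists:
  fixes a :: "'g \<Rightarrow> 'k::field"
  assumes a: "a \<noteq> (\<lambda>_. 0)" "well_ordered_on leg (supp a)"
  defines "g0 \<equiv> init_exp leg a"
  defines "S \<equiv> {s. s \<noteq> 0 \<and> g0 + s \<in> supp a}"
  shows "\<exists>u. well_ordered_on leg (supp u) \<and> conv a u = delta \<and> (\<forall>x\<in>supp u. x + g0 \<in> sums S)"
proof -
  have g0: "g0 \<in> supp a" "\<forall>h\<in>supp a. leg g0 h" using init_exp_prop[OF a] unfolding g0_def by auto
  have Sp: "well_ordered_on leg S" "\<forall>s\<in>S. lt 0 s" using S_props[OF a] unfolding S_def g0_def by auto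
  have SC: "S \<subseteq> UNIV" by simp
  have wM: "well_ordered_on leg (sums S)" using neumann_wo[OF SC Sp] .
  define c0 where "c0 = a g0"
  have c0: "c0 \<noteq> 0" using g0 unfolding c0_def supp_def by simp
  define h where "h s = (if s = 0 then 0 else - a (g0 + s) / c0)" for s
  have ha: "a (g0 + s) = - c0 * h s" if "s \<in> S" for s
    using that c0 unfolding h_def S_def by auto
  define Lg where "Lg g = {L \<in> lists S. sum_list L = g}" for g
  have fLg: "finite (Lg g)" for g unfolding Lg_def using neumann_fin[OF SC Sp] .
  define Ginv where "Ginv g = (\<Sum>L\<in>Lg g. prod_list (map h L))" for g
  have Gs: "Ginv g \<noteq> 0 \<Longrightarrow> g \<in> sums S" for g
  proof -
    assume "Ginv g \<noteq> 0"
    then have "Lg g \<noteq> {}" unfolding Ginv_def by auto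
    then show "g \<in> sums S" unfolding Lg_def sums_def by blast
  qed
  define T where "T g = {s. s \<in> S \<and> g - s \<in> sums S}" for g
  have fT: "finite (T g)" for g unfolding T_def using conv_fin[OF Sp(1) wM] .
  have K: "Ginv g = delta g + (\<Sum>s\<in>T g. h s * Ginv (g - s))" for g
  proof -
    define A0 where "A0 = {L \<in> Lg g. L = []}"
    define A1 where "A1 = {L \<in> Lg g. L \<noteq> []}"
    have split: "Lg g = A0 \<union> A1" "A0 \<inter> A1 = {}" unfolding A0_def A1_def by auto
    have fA: "finite A0" "finite A1" unfolding A0_def A1_def
      by (rule finite_subset[of _ "Lg g"], force, rule fLg)+
    have s0: "(\<Sum>L\<in>A0. prod_list (map h L)) = delta g"
    proof (cases "g = 0")
      case True
      then have "A0 = {[]}" unfolding A0_def Lg_def by auto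
      then show ?thesis using True by (simp add: delta_def)
    next
      case False
      then have "A0 = {}" unfolding A0_def Lg_def by auto
      then show ?thesis using False by (simp add: delta_def)
    qed
    define \<phi> where "\<phi> p = fst p # snd p" for p :: "'g \<times> 'g list"
    have bij: "bij_betw \<phi> (SIGMA s:T g. Lg (g - s)) A1"
    proof (rule bij_betwI')
      fix x y assume "x \<in> (SIGMA s:T g. Lg (g - s))" "y \<in> (SIGMA s:T g. Lg (g - s))"
      show "(\<phi> x = \<phi> y) = (x = y)" unfolding \<phi>_def by (simp add: prod_eq_iff)
    next
      fix x assume x: "x \<in> (SIGMA s:T g. Lg (g - s))"
      then have "fst x \<in> S" "snd x \<in> lists S" "sum_list (snd x) = g - fst x"
        unfolding T_def Lg_def by auto
      then show "\<phi> x \<in> A1" unfolding A1_def Lg_def \<phi>_def by simp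
    next
      fix L assume L: "L \<in> A1"
      then obtain s L' where e: "L = s # L'" unfolding A1_def by (cases L) auto
      then have "s \<in> S" "L' \<in> lists S" "s + sum_list L' = g" using L unfolding A1_def Lg_def by auto
      then have "sum_list L' = g - s" by (simp add: algebra_simps)
      then have "g - s \<in> sums S" using `L' \<in> lists S` unfolding sums_def by (metis (mono_tags, lifting) mem_Collect_eq)
      then have "(s, L') \<in> (SIGMA s:T g. Lg (g - s))"
        using `s \<in> S` `L' \<in> lists S` `sum_list L' = g - s` unfolding T_def Lg_def by simp
      moreover have "L = \<phi> (s, L')" unfolding \<phi>_def e by simp
      ultimately show "\<exists>x\<in>(SIGMA s:T g. Lg (g - s)). L = \<phi> x" by blast
    qed
    have "(\<Sum>L\<in>A1. prod_list (map h L)) = (\<Sum>p\<in>(SIGMA s:T g. Lg (g - s)). prod_list (map h (\<phi> p)))"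
      using sum.reindex_bij_betw[OF bij, of "\<lambda>L. prod_list (map h L)"] by simp
    also have "\<dots> = (\<Sum>p\<in>(SIGMA s:T g. Lg (g - s)). h (fst p) * prod_list (map h (snd p)))"
      unfolding \<phi>_def by simp
    also have "\<dots> = (\<Sum>s\<in>T g. \<Sum>L'\<in>Lg (g - s). h s * prod_list (map h L'))"
      using sum.Sigma[where B="\<lambda>s. Lg (g - s)" and g="\<lambda>s L'. h s * prod_list (map h L')", OF fT] fLg
      by (simp add: case_prod_beta)
    also have "\<dots> = (\<Sum>s\<in>T g. h s * Ginv (g - s))"
      unfolding Ginv_def by (simp add: sum_distrib_left)
    finally have s1: "(\<Sum>L\<in>A1. prod_list (map h L)) = (\<Sum>s\<in>T g. h s * Ginv (g - s))" .
    have "Ginv g = (\<Sum>L\<in>A0. prod_list (map h L)) + (\<Sum>L\<in>A1. prod_list (map h L))"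
      unfolding Ginv_def split(1) by (rule sum.union_disjoint[OF fA split(2)])
    then show ?thesis using s0 s1 by simp
  qed
  define u where "u x = Ginv (x + g0) / c0" for x
  have conv_u: "conv a u g = delta g" for g
  proof -
    define X where "X = insert g0 ((+) g0 ` T g)"
    have fX: "finite X" unfolding X_def using fT by simp
    have sub: "{x. x \<in> supp a \<and> g - x \<in> supp u} \<subseteq> X"
    proof
      fix x assume x: "x \<in> {x. x \<in> supp a \<and> g - x \<in> supp u}"
      show "x \<in> X"
      proof (cases "x = g0")
        case True then show ?thesis unfolding X_def by simp
      next
        case False
        define s where "s = x - g0"
        have "s \<noteq> 0" "g0 + s = x" using False unfolding s_def by (simp_all add: algebra_simps)
        then have sS: "s \<in> S" using x unfolding S_def by simp
        have "Ginv (g - x + g0) \<noteq> 0" using x c0 unfolding u_def supp_def by simp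
        moreover have "g - x + g0 = g - s" unfolding s_def by (simp add: algebra_simps)
        ultimately have "g - s \<in> sums S" using Gs by simp
        then have "s \<in> T g" using sS unfolding T_def by simp
        then show ?thesis unfolding X_def using `g0 + s = x` by blast
      qed
    qed
    have nin: "g0 \<notin> (+) g0 ` T g"
    proof
      assume "g0 \<in> (+) g0 ` T g"
      then obtain s where "s \<in> T g" "g0 = g0 + s" by blast
      then show False unfolding T_def S_def by simp
    qed
    have "conv a u g = (\<Sum>x\<in>X. a x * u (g - x))" by (rule conv_superset[OF fX sub])
    also have "\<dots> = a g0 * u (g - g0) + (\<Sum>x\<in>(+) g0 ` T g. a x * u (g - x))"
      unfolding X_def using nin fT by (simp add: sum.insert)
    also have "(\<Sum>x\<in>(+) g0 ` T g. a x * u (g - x)) = (\<Sum>s\<in>T g. a (g0 + s) * u (g - (g0 + s)))"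
      by (rule sum.reindex_cong[of "(+) g0"]) (auto simp: inj_on_def)
    also have "\<dots> = (\<Sum>s\<in>T g. - (h s * Ginv (g - s)))"
    proof (rule sum.cong[OF HOL.refl])
      fix s assume "s \<in> T g"
      then have "s \<in> S" unfolding T_def by simp
      then have e1: "a (g0 + s) = - c0 * h s" using ha by blast
      have "g - (g0 + s) + g0 = g - s" by (simp add: algebra_simps)
      then have e2: "u (g - (g0 + s)) = Ginv (g - s) / c0" unfolding u_def by simp
      have "a (g0 + s) * u (g - (g0 + s)) = - c0 * h s * (Ginv (g - s) / c0)"
        unfolding e1 e2 by simp
      then show "a (g0 + s) * u (g - (g0 + s)) = - (h s * Ginv (g - s))" using c0 by simp
    qed
    also have "a g0 * u (g - g0) = Ginv g" unfolding u_def c0_def[symmetric] using c0 by simp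
    finally show ?thesis using K[of g] by (simp add: sum_negf)
  qed
  have su: "\<forall>x\<in>supp u. x + g0 \<in> sums S"
  proof
    fix x assume "x \<in> supp u"
    then have "Ginv (x + g0) \<noteq> 0" unfolding u_def supp_def by simp
    then show "x + g0 \<in> sums S" using Gs by blast
  qed
  have "supp u \<subseteq> ssum (sums S) {- g0}"
  proof
    fix x assume "x \<in> supp u"
    then have "x + g0 \<in> sums S" "x = (x + g0) + - g0" using su by simp_all
    then show "x \<in> ssum (sums S) {- g0}" unfolding ssum_def by blast
  qed
  moreover have "well_ordered_on leg (ssum (sums S) {- g0})"
    using wo_ssum[OF _ wM _ wo_single] by simp
  ultimately have "well_ordered_on leg (supp u)" using wo_subset by blast
  moreover have "conv a u = delta" using conv_u by blast
  ultimately show ?thesis using su by blast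
qed

end

lemma Hn_add: "k \<in> Hn n \<Longrightarrow> k' \<in> Hn n \<Longrightarrow> (\<lambda>j. k j + k' j) \<in> Hn n"
  unfolding Hn_def by simp
lemma Hn_neg: "k \<in> Hn n \<Longrightarrow> (\<lambda>j. - k j) \<in> Hn n"
  unfolding Hn_def by simp
lemma Hn_zero: "(\<lambda>_. 0) \<in> Hn n"
  unfolding Hn_def by simp
lemma brow_Hn: "brow n B i \<in> Hn n"
  unfolding Hn_def brow_def by simp

lemma carrier_iff: "x \<in> grp_carrier n \<longleftrightarrow> snd x \<in> Hn n"
  unfolding grp_carrier_def by (cases x) auto

lemma gadd_eq: "gadd x y = x + y"
  unfolding gadd_def plus_prod_def plus_fun_def by simp

lemma gzero_eq: "gzero = (0, (\<lambda>_. 0))"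
  unfolding gzero_def by simp

lemma supp_xmono: "supp (xmono a b) = (\<lambda>g. (g, b)) ` supp a"
  unfolding supp_def xmono_def by (auto simp: image_iff)

lemma embG_eq: "embG p = xmono p (\<lambda>_. 0)"
  unfolding embG_def xmono_def by simp

lemma sone_eq: "(sone :: 'g::ab_group_add grp \<Rightarrow> 'k::field) = xmono delta (\<lambda>_. 0)"
proof
  fix c :: "'g grp"
  show "sone c = xmono delta (\<lambda>_. 0) c"
    unfolding sone_def xmono_def delta_def gzero_def by (cases c) auto
qed

lemma smult_xmono_left:
  fixes a :: "'g::ab_group_add \<Rightarrow> 'k::field"
  shows "smult (xmono a b) v (g, k) = conv a (\<lambda>h. v (h, \<lambda>j. k j - b j)) g"
proof -
  let ?P = "{(x, y). x \<in> supp (xmono a b) \<and> y \<in> supp v \<and> gadd x y = (g, k)}"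
  let ?Q = "{h. h \<in> supp a \<and> g - h \<in> supp (\<lambda>h. v (h, \<lambda>j. k j - b j))}"
  define \<phi> where "\<phi> h = ((h, b), (g - h, \<lambda>j. k j - b j))" for h
  have bij: "bij_betw \<phi> ?Q ?P"
  proof (rule bij_betwI')
    fix x y assume "x \<in> ?Q" "y \<in> ?Q"
    show "(\<phi> x = \<phi> y) = (x = y)" unfolding \<phi>_def by auto
  next
    fix h assume h: "h \<in> ?Q"
    have "(h, b) \<in> supp (xmono a b)" using h unfolding supp_xmono by auto
    moreover have "(g - h, \<lambda>j. k j - b j) \<in> supp v" using h unfolding supp_def by simp
    moreover have "gadd (h, b) (g - h, \<lambda>j. k j - b j) = (g, k)" unfolding gadd_def by simp
    ultimately show "\<phi> h \<in> ?P" unfolding \<phi>_def by simp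
  next
    fix p assume p: "p \<in> ?P"
    obtain x y where xy: "p = (x, y)" by (cases p)
    then have x: "x \<in> supp (xmono a b)" and y: "y \<in> supp v" and e: "gadd x y = (g, k)" using p by auto
    obtain h where h: "x = (h, b)" "h \<in> supp a" using x unfolding supp_xmono by auto
    have "fst y = g - h" using e h unfolding gadd_def by (auto simp: algebra_simps)
    moreover have "snd y = (\<lambda>j. k j - b j)" using e h unfolding gadd_def by (auto simp: algebra_simps)
    ultimately have ye: "y = (g - h, \<lambda>j. k j - b j)" by (simp add: prod_eq_iff)
    have "h \<in> ?Q" using h y ye unfolding supp_def by simp
    moreover have "p = \<phi> h" unfolding \<phi>_def xy h ye by simp
    ultimately show "\<exists>h\<in>?Q. p = \<phi> h" by blast
  qed
  have "smult (xmono a b) v (g, k) = (\<Sum>p\<in>?P. xmono a b (fst p) * v (snd p))"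
    unfolding smult_def by simp
  also have "\<dots> = (\<Sum>h\<in>?Q. xmono a b (fst (\<phi> h)) * v (snd (\<phi> h)))"
    using sum.reindex_bij_betw[OF bij, of "\<lambda>p. xmono a b (fst p) * v (snd p)"] by simp
  also have "\<dots> = (\<Sum>h\<in>?Q. a h * v (g - h, \<lambda>j. k j - b j))"
    unfolding \<phi>_def xmono_def by simp
  also have "\<dots> = conv a (\<lambda>h. v (h, \<lambda>j. k j - b j)) g"
    unfolding conv_def by simp
  finally show ?thesis .
qed

lemma smult_xmono:
  fixes a u :: "'g::ab_group_add \<Rightarrow> 'k::field"
  shows "smult (xmono a b) (xmono u b') = xmono (conv a u) (\<lambda>j. b j + b' j)"
proof
  fix c :: "'g grp"
  obtain g k where c: "c = (g, k)" by (cases c)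
  show "smult (xmono a b) (xmono u b') c = xmono (conv a u) (\<lambda>j. b j + b' j) c"
  proof (cases "(\<lambda>j. k j - b j) = b'")
    case True
    have ke: "k = (\<lambda>j. b j + b' j)"
    proof
      fix j have "k j - b j = b' j" using True by (metis)
      then show "k j = b j + b' j" by (simp add: algebra_simps)
    qed
    have e: "(\<lambda>h. xmono u b' (h, \<lambda>j. k j - b j)) = u"
      by (rule ext) (simp add: xmono_def True)
    have "smult (xmono a b) (xmono u b') (g, k) = conv a u g" unfolding smult_xmono_left e ..
    moreover have "xmono (conv a u) (\<lambda>j. b j + b' j) (g, k) = conv a u g" unfolding xmono_def ke by simp
    ultimately show ?thesis unfolding c by simp
  next
    case False
    have ne: "k \<noteq> (\<lambda>j. b j + b' j)"
    proof
      assume "k = (\<lambda>j. b j + b' j)"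
      then have "(\<lambda>j. k j - b j) = b'" by (simp)
      then show False using False by simp
    qed
    have e: "(\<lambda>h. xmono u b' (h, \<lambda>j. k j - b j)) = (\<lambda>_. 0)"
      by (rule ext) (simp add: xmono_def False)
    have "smult (xmono a b) (xmono u b') (g, k) = 0" unfolding smult_xmono_left e conv_zero_right ..
    moreover have "xmono (conv a u) (\<lambda>j. b j + b' j) (g, k) = 0" unfolding xmono_def using ne by simp
    ultimately show ?thesis unfolding c by simp
  qed
qed

locale setting =
  fixes n :: nat and le :: "('g::ab_group_add) grp \<Rightarrow> 'g grp \<Rightarrow> bool"
  assumes ord: "ordered_group_on (grp_carrier n) le"
begin

lemma ordP: "oag (grp_carrier n) le"
proof -
  note o = ord[unfolded ordered_group_on_def gadd_eq]
  show ?thesis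
  proof
    show "0 \<in> grp_carrier n" unfolding carrier_iff zero_prod_def zero_fun_def using Hn_zero by simp
    show "x + y \<in> grp_carrier n" if "x \<in> grp_carrier n" "y \<in> grp_carrier n" for x y
      using that unfolding carrier_iff by (simp add: plus_fun_def Hn_def)
    show "- x \<in> grp_carrier n" if "x \<in> grp_carrier n" for x
      using that unfolding carrier_iff by (simp add: Hn_def)
  qed (use o in blast)+
qed

sublocale P: oag "grp_carrier n" le by (rule ordP)

lemma inC: "k \<in> Hn n \<Longrightarrow> (g, k) \<in> grp_carrier n"
  unfolding carrier_iff by simp

lemma ordG: "gser (leG le)"
proof
  have C0: "(g, \<lambda>_. 0) \<in> grp_carrier n" for g using inC Hn_zero by blast
  have add0: "(g, \<lambda>_. 0) + (h, \<lambda>_. 0) = (g + h, (\<lambda>_. 0::int))" for g h :: 'g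
    by (simp add: plus_fun_def)
  show "leG le a a" for a unfolding leG_def using P.refl C0 by blast
  show "leG le a b \<Longrightarrow> leG le b a \<Longrightarrow> a = b" for a b unfolding leG_def using P.antisym C0 by blast
  show "leG le a b \<Longrightarrow> leG le b c \<Longrightarrow> leG le a c" for a b c unfolding leG_def using P.trans C0 by blast
  show "leG le a b \<or> leG le b a" for a b unfolding leG_def using P.total C0 by blast
  show "leG le (a + c) (b + c)" if "leG le a b" for a b c
    using P.mono[OF C0 C0 C0 that[unfolded leG_def]] unfolding leG_def add0 .
qed simp_all

sublocale G: gser "leG le" by (rule ordG)

lemma le_shift:
  assumes k: "k \<in> Hn n"
  shows "le (g, k) (g', k) \<longleftrightarrow> leG le g g'"
proof -
  have C: "(g, \<lambda>_. 0) \<in> grp_carrier n" "(g', \<lambda>_. 0) \<in> grp_carrier n" "(0, k) \<in> grp_carrier n"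
    using inC Hn_zero k by blast+
  have "(g, \<lambda>_. 0) + (0, k) = (g, k)" "(g', \<lambda>_. 0) + (0, k) = (g', k)"
    by (simp_all add: plus_fun_def)
  then show ?thesis using P.mono_iff[OF C] unfolding leG_def by simp
qed

lemma wo_emb:
  assumes k: "k \<in> Hn n" and w: "well_ordered_on (leG le) A"
  shows "well_ordered_on le ((\<lambda>g. (g, k)) ` A)"
proof (rule wo_image)
  have "(\<lambda>x y. le (x, k) (y, k)) = leG le" using le_shift[OF k] by (intro ext) simp
  then show "well_ordered_on (\<lambda>x y. le (x, k) (y, k)) A" using w by simp
qed

lemma wo_slice:
  assumes k: "k \<in> Hn n" and w: "well_ordered_on le V"
  shows "well_ordered_on (leG le) {g. (g, k) \<in> V}"
  unfolding well_ordered_on_def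
proof (intro allI impI)
  fix T assume T: "T \<subseteq> {g. (g, k) \<in> V}" "T \<noteq> {}"
  have "(\<lambda>g. (g, k)) ` T \<subseteq> V" "(\<lambda>g. (g, k)) ` T \<noteq> {}" using T by auto
  then obtain m where m: "m \<in> (\<lambda>g. (g, k)) ` T" "\<forall>t\<in>(\<lambda>g. (g, k)) ` T. le m t"
    using w unfolding well_ordered_on_def by blast
  then obtain g where g: "g \<in> T" "m = (g, k)" by blast
  have "\<forall>t\<in>T. leG le g t" using m g le_shift[OF k] by auto
  then show "\<exists>m\<in>T. \<forall>t\<in>T. leG le m t" using g by blast
qed

lemma wo_empty: "well_ordered_on r {}"
  unfolding well_ordered_on_def by simp

lemma sinv_xmono:
  fixes a :: "'g \<Rightarrow> 'k::field"
  assumes a: "a \<noteq> (\<lambda>_. 0)" "well_ordered_on (leG le) (supp a)" and b: "b \<in> Hn n"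
  defines "g0 \<equiv> init_exp (leG le) a"
  defines "S \<equiv> {s. s \<noteq> 0 \<and> g0 + s \<in> supp a}"
  shows "\<exists>u. sinv le (grp_carrier n) (xmono a b) = xmono u (\<lambda>j. - b j) \<and> (\<forall>x\<in>supp u. x + g0 \<in> G.sums S)"
proof -
  obtain u where u: "well_ordered_on (leG le) (supp u)" "conv a u = delta" "\<forall>x\<in>supp u. x + g0 \<in> G.sums S"
    using G.inverse_exists[OF a] unfolding g0_def S_def by blast
  have nb: "(\<lambda>j. - b j) \<in> Hn n" using Hn_neg[OF b] .
  have MN1: "xmono u (\<lambda>j. - b j) \<in> MN le (grp_carrier n)"
  proof -
    have e: "supp (xmono u (\<lambda>j. - b j)) = (\<lambda>g. (g, \<lambda>j. - b j)) ` supp u" by (rule supp_xmono)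
    show ?thesis unfolding MN_def mem_Collect_eq e using wo_emb[OF nb u(1)] inC[OF nb] by blast
  qed
  have inv1: "smult (xmono a b) (xmono u (\<lambda>j. - b j)) = sone"
    unfolding smult_xmono u(2) sone_eq by simp
  have uniq: "v = xmono u (\<lambda>j. - b j)" if v: "v \<in> MN le (grp_carrier n)" "smult (xmono a b) v = sone" for v
  proof
    fix c :: "'g grp"
    obtain g k where c: "c = (g, k)" by (cases c)
    define w where "w h = v (h, k)" for h
    have cw: "conv a w = (if (\<lambda>j. k j + b j) = (\<lambda>_. 0) then delta else (\<lambda>_. 0))"
    proof
      fix g'
      have "smult (xmono a b) v (g', \<lambda>j. k j + b j) = conv a w g'"
        unfolding smult_xmono_left w_def by simp
      moreover have "smult (xmono a b) v (g', \<lambda>j. k j + b j) = sone (g', \<lambda>j. k j + b j)" using v(2) by simp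
      ultimately have "conv a w g' = sone (g', \<lambda>j. k j + b j)" by simp
      then show "conv a w g' = (if (\<lambda>j. k j + b j) = (\<lambda>_. 0) then delta else (\<lambda>_. 0)) g'"
        unfolding sone_eq xmono_def by simp
    qed
    have ww: "well_ordered_on (leG le) (supp w)"
    proof (cases "k \<in> Hn n")
      case True
      have "supp w = {h. (h, k) \<in> supp v}" unfolding w_def supp_def by simp
      then show ?thesis using wo_slice[OF True] v(1) unfolding MN_def by simp
    next
      case False
      have "supp w = {}"
      proof -
        have "(h, k) \<notin> supp v" for h
        proof
          assume "(h, k) \<in> supp v"
          then have "(h, k) \<in> grp_carrier n" using v(1) unfolding MN_def by blast
          then show False using False unfolding carrier_iff by simp
        qed
        then show ?thesis unfolding w_def supp_def by simp
      qed
      then show ?thesis using wo_empty by simp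
    qed
    show "v c = xmono u (\<lambda>j. - b j) c"
    proof (cases "(\<lambda>j. k j + b j) = (\<lambda>_. 0)")
      case True
      then have "conv a w = conv a u" using cw u(2) by simp
      then have wu: "w = u" using G.conv_cancel[OF a ww u(1)] by simp
      have ke: "k = (\<lambda>j. - b j)"
      proof
        fix j have "k j + b j = 0" using fun_cong[OF True, of j] by simp
        then show "k j = - b j" by linarith
      qed
      have "v (g, k) = u g" using fun_cong[OF wu, of g] unfolding w_def by simp
      then show ?thesis unfolding c xmono_def using ke by simp
    next
      case False
      then have "conv a w = conv a (\<lambda>_. 0)" unfolding conv_zero_right using cw by simp
      moreover have "well_ordered_on (leG le) (supp (\<lambda>_::'g. 0::'k))" unfolding supp_def using wo_empty by simp
      ultimately have w0: "w = (\<lambda>_. 0)" using G.conv_cancel[OF a ww] by blast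
      have kne: "k \<noteq> (\<lambda>j. - b j)"
      proof
        assume "k = (\<lambda>j. - b j)"
        then have "(\<lambda>j. k j + b j) = (\<lambda>_. 0)" by simp
        then show False using False by simp
      qed
      have "v (g, k) = 0" using fun_cong[OF w0, of g] unfolding w_def by simp
      then show ?thesis unfolding c xmono_def using kne by simp
    qed
  qed
  have "sinv le (grp_carrier n) (xmono a b) = xmono u (\<lambda>j. - b j)"
    unfolding sinv_def
  proof (rule the_equality)
    show "xmono u (\<lambda>j. - b j) \<in> MN le (grp_carrier n) \<and> smult (xmono a b) (xmono u (\<lambda>j. - b j)) = sone"
      using MN1 inv1 by simp
  next
    fix v assume "v \<in> MN le (grp_carrier n) \<and> smult (xmono a b) v = sone"
    then show "v = xmono u (\<lambda>j. - b j)" using uniq by blast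
  qed
  then show ?thesis using u(3) by blast
qed

end

lemma det_eq_rows:
  fixes M :: "nat \<Rightarrow> nat \<Rightarrow> int"
  assumes rl: "r < n" "l < n" "r \<noteq> l" and eq: "\<forall>j<n. M r j = M l j"
  shows "det_n n M = 0"
proof -
  let ?R = "{..<n}"
  let ?P = "{p. p permutes ?R}"
  let ?t = "transpose r l"
  define f where "f p = sign p * (\<Prod>i<n. M i (p i))" for p
  have tP: "?t permutes ?R" using rl by (simp add: permutes_swap_id)
  have bij: "bij_betw (\<lambda>p. p \<circ> ?t) ?P ?P"
  proof (rule bij_betwI[where g="\<lambda>p. p \<circ> ?t"])
    show "(\<lambda>p. p \<circ> ?t) \<in> ?P \<rightarrow> ?P" using permutes_compose[OF tP] by auto
    show "(\<lambda>p. p \<circ> ?t) \<in> ?P \<rightarrow> ?P" using permutes_compose[OF tP] by auto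
    show "x \<circ> ?t \<circ> ?t = x" for x by (simp add: comp_assoc)
    show "y \<circ> ?t \<circ> ?t = y" for y by (simp add: comp_assoc)
  qed
  have fP: "finite ?R" by simp
  have key: "f (p \<circ> ?t) = - f p" if p: "p \<in> ?P" for p
  proof -
    have pp: "permutation p" using p permutation_permutes fP by blast
    have tp: "permutation ?t" using tP permutation_permutes fP by blast
    have st: "sign ?t = (- 1 :: int)" using rl(3) sign_swap_id[of r l] by simp
    have s: "sign (p \<circ> ?t) = - sign p" using sign_compose[OF pp tp] st by simp
    have bt: "bij_betw ?t ?R ?R" using tP permutes_imp_bij by blast
    have "(\<Prod>i<n. M i ((p \<circ> ?t) i)) = (\<Prod>i<n. M (?t i) ((p \<circ> ?t) (?t i)))"
      using prod.reindex_bij_betw[OF bt, of "\<lambda>i. M i ((p \<circ> ?t) i)"] by simp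
    also have "\<dots> = (\<Prod>i<n. M i (p i))"
    proof (rule prod.cong[OF HOL.refl])
      fix i assume i: "i \<in> ?R"
      have pi: "p i < n" using p i permutes_in_image by fastforce
      show "M (?t i) ((p \<circ> ?t) (?t i)) = M i (p i)"
        using eq pi by (auto simp: transpose_def)
    qed
    finally show ?thesis unfolding f_def s by simp
  qed
  have "det_n n M = (\<Sum>p\<in>?P. f p)" unfolding det_n_def f_def by simp
  also have "\<dots> = (\<Sum>p\<in>?P. f (p \<circ> ?t))"
    using sum.reindex_bij_betw[OF bij, of f] by simp
  also have "\<dots> = (\<Sum>p\<in>?P. - f p)" by (rule sum.cong[OF HOL.refl]) (use key in blast)
  also have "\<dots> = - det_n n M" unfolding det_n_def f_def by (simp add: sum_negf)
  finally show ?thesis by simp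
qed

lemma detn_inj:
  fixes B :: "nat \<Rightarrow> nat \<Rightarrow> int"
  assumes "det_n n B \<noteq> 0" and hk: "\<forall>j<n. (\<Sum>i<n. k i * B i j) = 0"
  shows "\<forall>r<n. k r = 0"
proof (intro allI impI)
  fix r assume r: "r < n"
  let ?R = "{..<n}"
  let ?P = "{p. p permutes ?R}"
  define Mx where "Mx x = (\<lambda>i j. if i = r then x j else B i j)" for x :: "nat \<Rightarrow> int"
  define Q where "Q p = (\<Prod>i\<in>?R - {r}. B i (p i))" for p :: "nat \<Rightarrow> nat"
  have Dx: "det_n n (Mx x) = (\<Sum>p\<in>?P. sign p * x (p r) * Q p)" for x
  proof -
    have "(\<Prod>i<n. Mx x i (p i)) = x (p r) * Q p" for p
    proof -
      have "(\<Prod>i<n. Mx x i (p i)) = Mx x r (p r) * (\<Prod>i\<in>?R - {r}. Mx x i (p i))"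
        using prod.remove[of ?R r] r by simp
      also have "(\<Prod>i\<in>?R - {r}. Mx x i (p i)) = Q p" unfolding Q_def Mx_def by (rule prod.cong) auto
      finally show ?thesis unfolding Mx_def by simp
    qed
    then show ?thesis unfolding det_n_def by (simp add: mult.assoc)
  qed
  define x0 where "x0 j = (\<Sum>l<n. k l * B l j)" for j
  have z: "det_n n (Mx x0) = 0"
  proof -
    have "x0 (p r) = 0" if "p \<in> ?P" for p
    proof -
      have "p r < n" using that r permutes_in_image by fastforce
      then show ?thesis unfolding x0_def using hk by simp
    qed
    then show ?thesis unfolding Dx by simp
  qed
  have e: "det_n n (Mx x0) = (\<Sum>l<n. k l * det_n n (Mx (B l)))"
  proof -
    have "det_n n (Mx x0) = (\<Sum>p\<in>?P. \<Sum>l<n. k l * (sign p * B l (p r) * Q p))"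
      unfolding Dx x0_def by (rule sum.cong[OF HOL.refl]) (simp add: sum_distrib_left sum_distrib_right algebra_simps)
    also have "\<dots> = (\<Sum>l<n. \<Sum>p\<in>?P. k l * (sign p * B l (p r) * Q p))" by (rule sum.swap)
    also have "\<dots> = (\<Sum>l<n. k l * det_n n (Mx (B l)))" unfolding Dx by (simp add: sum_distrib_left)
    finally show ?thesis .
  qed
  have dz: "det_n n (Mx (B l)) = 0" if "l < n" "l \<noteq> r" for l
    by (rule det_eq_rows[OF r that(1) that(2)[symmetric]]) (simp add: Mx_def that(2))
  have br: "Mx (B r) = B" unfolding Mx_def by (intro ext) simp
  have "(\<Sum>l<n. k l * det_n n (Mx (B l))) = (\<Sum>l<n. if l = r then k l * det_n n B else 0)"
  proof (rule sum.cong[OF HOL.refl])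
    fix l assume "l \<in> {..<n}"
    then show "k l * det_n n (Mx (B l)) = (if l = r then k l * det_n n B else 0)"
      using dz[of l] br by auto
  qed
  then have "0 = (\<Sum>l<n. if l = r then k l * det_n n B else 0)" using z e by simp
  also have "\<dots> = k r * det_n n B" using r by simp
  finally show "k r = 0" using assms(1) by simp
qed

definition Good :: "'g::ab_group_add set \<Rightarrow> 'g \<Rightarrow> (nat \<Rightarrow> int) \<Rightarrow> ('g grp \<Rightarrow> 'k::field) \<Rightarrow> bool" where
  "Good M \<gamma> \<kappa> s \<longleftrightarrow> (\<exists>w. s = xmono w \<kappa> \<and> (\<forall>x\<in>supp w. x - \<gamma> \<in> M))"

lemma Good_mult:
  assumes cl: "\<And>x y. x \<in> M \<Longrightarrow> y \<in> M \<Longrightarrow> x + y \<in> M"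
    and s: "Good M \<gamma> \<kappa> s" and t: "Good M \<gamma>' \<kappa>' t"
  shows "Good M (\<gamma> + \<gamma>') (\<lambda>j. \<kappa> j + \<kappa>' j) (smult s t)"
proof -
  obtain w where w: "s = xmono w \<kappa>" "\<forall>x\<in>supp w. x - \<gamma> \<in> M" using s unfolding Good_def by blast
  obtain w' where w': "t = xmono w' \<kappa>'" "\<forall>x\<in>supp w'. x - \<gamma>' \<in> M" using t unfolding Good_def by blast
  have "smult s t = xmono (conv w w') (\<lambda>j. \<kappa> j + \<kappa>' j)" unfolding w(1) w'(1) by (rule smult_xmono)
  moreover have "\<forall>x\<in>supp (conv w w'). x - (\<gamma> + \<gamma>') \<in> M"
  proof
    fix x assume "x \<in> supp (conv w w')"
    then have "x \<in> ssum (supp w) (supp w')" using conv_supp by blast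
    then obtain y y' where yy: "y \<in> supp w" "y' \<in> supp w'" "x = y + y'" unfolding ssum_def by blast
    have e: "x - (\<gamma> + \<gamma>') = (y - \<gamma>) + (y' - \<gamma>')" using yy(3) by (simp add: algebra_simps)
    have "y - \<gamma> \<in> M" "y' - \<gamma>' \<in> M" using w(2) w'(2) yy by auto
    then show "x - (\<gamma> + \<gamma>') \<in> M" unfolding e by (rule cl)
  qed
  ultimately show ?thesis unfolding Good_def by blast
qed

lemma Good_sone: "0 \<in> M \<Longrightarrow> Good M 0 (\<lambda>_. 0) sone"
  unfolding Good_def sone_eq by (intro exI[of _ delta]) (simp add: supp_delta)

lemma Good_snpow:
  assumes cl: "\<And>x y. x \<in> M \<Longrightarrow> y \<in> M \<Longrightarrow> x + y \<in> M" and z: "0 \<in> M"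
    and s: "Good M \<gamma> \<kappa> s"
  shows "Good M (\<Sum>_<m. \<gamma>) (\<lambda>j. int m * \<kappa> j) (snpow s m)"
proof (induction m)
  case 0
  have "(\<lambda>j. int 0 * \<kappa> j) = (\<lambda>_. 0)" by simp
  then show ?case using Good_sone[OF z] by simp
next
  case (Suc m)
  have "Good M (\<gamma> + (\<Sum>_<m. \<gamma>)) (\<lambda>j. \<kappa> j + int m * \<kappa> j) (smult s (snpow s m))"
    by (rule Good_mult[OF cl s Suc.IH])
  moreover have "\<gamma> + (\<Sum>_<m. \<gamma>) = (\<Sum>_<Suc m. \<gamma>)" by (simp add: add.commute)
  moreover have "(\<lambda>j. \<kappa> j + int m * \<kappa> j) = (\<lambda>j. int (Suc m) * \<kappa> j)" by (simp add: algebra_simps)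
  ultimately show ?case by simp
qed

lemma Good_sipow:
  assumes cl: "\<And>x y. x \<in> M \<Longrightarrow> y \<in> M \<Longrightarrow> x + y \<in> M" and z: "0 \<in> M"
    and f: "Good M \<gamma> b f" and fi: "Good M (- \<gamma>) (\<lambda>j. - b j) (sinv le C f)"
  shows "Good M (zsmul k \<gamma>) (\<lambda>j. k * b j) (sipow le C f k)"
proof (cases "0 \<le> k")
  case True
  have "Good M (\<Sum>_<nat k. \<gamma>) (\<lambda>j. int (nat k) * b j) (snpow f (nat k))"
    by (rule Good_snpow[OF cl z f])
  then show ?thesis using True unfolding sipow_def zsmul_def by simp
next
  case False
  have "Good M (\<Sum>_<nat (- k). - \<gamma>) (\<lambda>j. int (nat (- k)) * - b j) (snpow (sinv le C f) (nat (- k)))"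
    by (rule Good_snpow[OF cl z fi])
  moreover have "(\<Sum>_<nat (- k). - \<gamma>) = - (\<Sum>_<nat (- k). \<gamma>)" by (simp add: sum_negf)
  moreover have "(\<lambda>j. int (nat (- k)) * - b j) = (\<lambda>j. k * b j)" using False by simp
  ultimately show ?thesis using False unfolding sipow_def zsmul_def by simp
qed

lemma Good_sprod:
  assumes cl: "\<And>x y. x \<in> M \<Longrightarrow> y \<in> M \<Longrightarrow> x + y \<in> M" and z: "0 \<in> M"
    and F: "\<And>i. i < m \<Longrightarrow> Good M (\<gamma> i) (\<kappa> i) (F i)"
  shows "Good M (\<Sum>i<m. \<gamma> i) (\<lambda>j. \<Sum>i<m. \<kappa> i j) (sprod F m)"
  using F
proof (induction m)
  case 0
  have "(\<lambda>j. \<Sum>i<(0::nat). \<kappa> i j) = (\<lambda>_. 0)" by simp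
  then show ?case using Good_sone[OF z] by simp
next
  case (Suc m)
  have "Good M ((\<Sum>i<m. \<gamma> i) + \<gamma> m) (\<lambda>j. (\<Sum>i<m. \<kappa> i j) + \<kappa> m j) (smult (sprod F m) (F m))"
    by (rule Good_mult[OF cl]) (use Suc in auto)
  then show ?case by simp
qed

lemma Good_supp:
  assumes "Good M \<gamma> \<kappa> s" "p \<in> supp s"
  shows "snd p = \<kappa> \<and> fst p - \<gamma> \<in> M"
proof -
  obtain w where w: "s = xmono w \<kappa>" "\<forall>x\<in>supp w. x - \<gamma> \<in> M" using assms(1) unfolding Good_def by blast
  have "p \<in> (\<lambda>g. (g, \<kappa>)) ` supp w" using assms(2) unfolding w(1) supp_xmono .
  then obtain g where "p = (g, \<kappa>)" "g \<in> supp w" by blast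
  then show ?thesis using w(2) by simp
qed

lemma subsingleton_finite: "(\<And>x y. x \<in> X \<Longrightarrow> y \<in> X \<Longrightarrow> x = y) \<Longrightarrow> finite X"
proof (cases "X = {}")
  case False
  assume h: "\<And>x y. x \<in> X \<Longrightarrow> y \<in> X \<Longrightarrow> x = y"
  obtain x0 where "x0 \<in> X" using False by blast
  then have "X \<subseteq> {x0}" using h by blast
  then show ?thesis using finite_subset by blast
qed simp

context setting begin

lemma main:
  fixes a :: "nat \<Rightarrow> 'g \<Rightarrow> 'k::field" and B :: "nat \<Rightarrow> nat \<Rightarrow> int" and Phi :: "'g grp \<Rightarrow> 'k"
  assumes a_MN: "\<forall>i<n. a i \<in> MN (leG le) UNIV"
    and a_nz: "\<forall>i<n. a i \<noteq> (\<lambda>_. 0)"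
    and detB: "det_n n B \<noteq> 0"
    and Phi_MN: "Phi \<in> MN (le_f le n (\<lambda>i. init_exp (leG le) (a i)) B) (grp_carrier n)"
  shows "let f = (\<lambda>i. xmono (a i) (brow n B i));
             F = (\<lambda>k. smult (embG (coeffx Phi k))
                        (sprod (\<lambda>i. sipow le (grp_carrier n) (f i) (k i)) n))
         in summable_fam le (grp_carrier n) F (Hn n)
            \<and> CT_x (sum_fam F (Hn n)) = CT_f Phi
            \<and> CT_f Phi = coeffx Phi (\<lambda>_. 0)"
proof -
  define gs where "gs i = init_exp (leG le) (a i)" for i
  define f where "f = (\<lambda>i. xmono (a i) (brow n B i))"
  define F where "F = (\<lambda>k. smult (embG (coeffx Phi k))
                        (sprod (\<lambda>i. sipow le (grp_carrier n) (f i) (k i)) n))"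
  define S where "S i = {s. s \<noteq> 0 \<and> gs i + s \<in> supp (a i)}" for i
  define Sall where "Sall = (\<Union>i<n. S i)"
  define M where "M = G.sums Sall"
  define \<Gamma> where "\<Gamma> k = (\<Sum>i<n. zsmul (k i) (gs i))" for k :: "nat \<Rightarrow> int"
  define K where "K k = (\<lambda>j. \<Sum>i<n. k i * brow n B i j)" for k :: "nat \<Rightarrow> int"
  have wa: "well_ordered_on (leG le) (supp (a i))" if "i < n" for i
    using a_MN that unfolding MN_def by blast
  have anz: "a i \<noteq> (\<lambda>_. 0)" if "i < n" for i using a_nz that by blast
  have Sp: "well_ordered_on (leG le) (S i) \<and> (\<forall>s\<in>S i. G.lt 0 s)" if "i < n" for i
    using G.S_props[OF anz[OF that] wa[OF that]] unfolding S_def gs_def by blast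
  have wSall: "well_ordered_on (leG le) Sall" unfolding Sall_def
    by (rule G.wo_UN) (use Sp in blast)
  have pSall: "\<forall>s\<in>Sall. G.lt 0 s" unfolding Sall_def using Sp by blast
  have Mcl: "x + y \<in> M" if "x \<in> M" "y \<in> M" for x y using that G.sums_add unfolding M_def by blast
  have M0: "0 \<in> M" unfolding M_def by (rule G.sums_zero)
  have wM: "well_ordered_on (leG le) M" unfolding M_def by (rule G.neumann_wo[OF _ wSall pSall]) simp
  have SM: "S i \<subseteq> Sall" if "i < n" for i unfolding Sall_def using that by blast
  have Gf: "Good M (gs i) (brow n B i) (f i)" if i: "i < n" for i
    unfolding Good_def f_def
  proof (intro exI[of _ "a i"] conjI ballI)
    fix x assume x: "x \<in> supp (a i)"
    show "x - gs i \<in> M"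
    proof (cases "x = gs i")
      case True then show ?thesis using M0 by simp
    next
      case False
      then have "x - gs i \<in> S i" using x unfolding S_def by simp
      then have "x - gs i \<in> Sall" using SM i by blast
      then show ?thesis unfolding M_def by (rule G.sums_single)
    qed
  qed simp
  have Gfi: "Good M (- gs i) (\<lambda>j. - brow n B i j) (sinv le (grp_carrier n) (f i))" if i: "i < n" for i
  proof -
    obtain u where u: "sinv le (grp_carrier n) (xmono (a i) (brow n B i)) = xmono u (\<lambda>j. - brow n B i j)"
      "\<forall>x\<in>supp u. x + gs i \<in> G.sums (S i)"
      using sinv_xmono[OF anz[OF i] wa[OF i] brow_Hn] unfolding gs_def S_def by blast
    have "G.sums (S i) \<subseteq> M" unfolding M_def using G.sums_mono SM i by blast
    then have "\<forall>x\<in>supp u. x - - gs i \<in> M" using u(2) by auto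
    then show ?thesis unfolding Good_def f_def u(1) by blast
  qed
  have Gs: "Good M (zsmul (k i) (gs i)) (\<lambda>j. k i * brow n B i j) (sipow le (grp_carrier n) (f i) (k i))"
    if "i < n" for i k
    by (rule Good_sipow[OF Mcl M0 Gf[OF that] Gfi[OF that]])
  have Gp: "Good M (\<Gamma> k) (K k) (sprod (\<lambda>i. sipow le (grp_carrier n) (f i) (k i)) n)" for k
  proof -
    have "Good M (\<Sum>i<n. zsmul (k i) (gs i)) (\<lambda>j. \<Sum>i<n. k i * brow n B i j)
            (sprod (\<lambda>i. sipow le (grp_carrier n) (f i) (k i)) n)"
    proof (rule Good_sprod)
      show "\<And>x y. x \<in> M \<Longrightarrow> y \<in> M \<Longrightarrow> x + y \<in> M" by (rule Mcl)
      show "0 \<in> M" by (rule M0)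
      show "\<And>i. i < n \<Longrightarrow> Good M (zsmul (k i) (gs i)) (\<lambda>j. k i * brow n B i j)
              (sipow le (grp_carrier n) (f i) (k i))" by (rule Gs)
    qed
    then show ?thesis unfolding \<Gamma>_def K_def .
  qed
  have fmapeq: "fmap n gs B (y, k) = (y + \<Gamma> k, K k)" for y k
    unfolding fmap_def \<Gamma>_def K_def by simp
  have Fsupp: "snd p = K k \<and> (\<exists>y z. (y, k) \<in> supp Phi \<and> z \<in> M \<and> p = fmap n gs B (y, k) + (z, \<lambda>_. 0))"
    if p: "p \<in> supp (F k)" for p k
  proof -
    obtain w where w: "sprod (\<lambda>i. sipow le (grp_carrier n) (f i) (k i)) n = xmono w (K k)"
      "\<forall>x\<in>supp w. x - \<Gamma> k \<in> M" using Gp[of k] unfolding Good_def by blast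
    have "F k = xmono (conv (coeffx Phi k) w) (\<lambda>j. 0 + K k j)"
      unfolding F_def w(1) embG_eq by (rule smult_xmono)
    then have Fk: "F k = xmono (conv (coeffx Phi k) w) (K k)" by simp
    have "p \<in> (\<lambda>g. (g, K k)) ` supp (conv (coeffx Phi k) w)" using p unfolding Fk supp_xmono .
    then obtain x where x: "p = (x, K k)" "x \<in> supp (conv (coeffx Phi k) w)" by blast
    then have "x \<in> ssum (supp (coeffx Phi k)) (supp w)" using conv_supp by blast
    then obtain y y' where yy: "y \<in> supp (coeffx Phi k)" "y' \<in> supp w" "x = y + y'"
      unfolding ssum_def by blast
    have "(y, k) \<in> supp Phi" using yy(1) unfolding supp_def coeffx_def by simp
    moreover have "y' - \<Gamma> k \<in> M" using w(2) yy(2) by blast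
    moreover have "p = fmap n gs B (y, k) + (y' - \<Gamma> k, \<lambda>_. 0)"
      unfolding fmapeq x(1) yy(3) by (simp add: plus_fun_def)
    moreover have "snd p = K k" using x(1) by simp
    ultimately show ?thesis by blast
  qed
  define U where "U = ssum (fmap n gs B ` supp Phi) ((\<lambda>m. (m, \<lambda>_::nat. 0::int)) ` M)"
  have fmapC: "fmap n gs B x \<in> grp_carrier n" for x
    unfolding carrier_iff fmap_def Hn_def brow_def by simp
  have supC: "supp Phi \<subseteq> grp_carrier n" using Phi_MN unfolding MN_def by blast
  have UC: "U \<subseteq> grp_carrier n" unfolding U_def
    by (rule P.ssumC) (use fmapC inC[OF Hn_zero] in auto)
  have wU: "well_ordered_on le U" unfolding U_def
  proof (rule P.wo_ssum)
    show "fmap n gs B ` supp Phi \<subseteq> grp_carrier n" using fmapC by auto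
    show "(\<lambda>m. (m, \<lambda>_::nat. 0::int)) ` M \<subseteq> grp_carrier n" using inC[OF Hn_zero] by auto
    show "well_ordered_on le ((\<lambda>m. (m, \<lambda>_::nat. 0::int)) ` M)" by (rule wo_emb[OF Hn_zero wM])
    have "(\<lambda>i. init_exp (leG le) (a i)) = gs" unfolding gs_def by simp
    then have "well_ordered_on (le_f le n gs B) (supp Phi)" using Phi_MN unfolding MN_def by simp
    moreover have "le_f le n gs B = (\<lambda>x y. le (fmap n gs B x) (fmap n gs B y))"
      unfolding le_f_def by (intro ext) simp
    ultimately show "well_ordered_on le (fmap n gs B ` supp Phi)" using wo_image by metis
  qed
  have FU: "supp (F k) \<subseteq> U" for k
  proof
    fix p assume "p \<in> supp (F k)"
    then obtain y z where "(y, k) \<in> supp Phi" "z \<in> M" "p = fmap n gs B (y, k) + (z, \<lambda>_. 0)"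
      using Fsupp by blast
    then show "p \<in> U" unfolding U_def ssum_def by blast
  qed
  have Kinj: "k = k'" if k: "k \<in> Hn n" "k' \<in> Hn n" "K k = K k'" for k k'
  proof
    fix i
    have "\<forall>j<n. (\<Sum>i<n. (k i - k' i) * B i j) = 0"
    proof (intro allI impI)
      fix j assume j: "j < n"
      have "(\<Sum>i<n. k i * brow n B i j) = (\<Sum>i<n. k' i * brow n B i j)"
        using fun_cong[OF k(3), of j] unfolding K_def by simp
      then have "(\<Sum>i<n. k i * B i j) = (\<Sum>i<n. k' i * B i j)" using j unfolding brow_def by simp
      then show "(\<Sum>i<n. (k i - k' i) * B i j) = 0" by (simp add: left_diff_distrib sum_subtractf)
    qed
    then have d: "\<forall>r<n. k r - k' r = 0" by (rule detn_inj[OF detB])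
    show "k i = k' i"
    proof (cases "i < n")
      case True then show ?thesis using d by simp
    next
      case False then show ?thesis using k(1,2) unfolding Hn_def by simp
    qed
  qed
  have K0: "K (\<lambda>_. 0) = (\<lambda>_. 0)" unfolding K_def by simp
  have Fnz: "snd c = K k" if "F k c \<noteq> 0" for k c
  proof -
    have "c \<in> supp (F k)" using that unfolding supp_def by simp
    then show ?thesis using Fsupp by blast
  qed
  have summ: "summable_fam le (grp_carrier n) F (Hn n)"
    unfolding summable_fam_def
  proof (intro conjI allI)
    show "(\<Union>k\<in>Hn n. supp (F k)) \<subseteq> grp_carrier n" using FU UC by blast
    have "(\<Union>k\<in>Hn n. supp (F k)) \<subseteq> U" using FU by blast
    then show "well_ordered_on le (\<Union>k\<in>Hn n. supp (F k))" using wU wo_subset by blast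
    fix c
    show "finite {k \<in> Hn n. F k c \<noteq> 0}"
    proof (rule subsingleton_finite)
      fix x y assume "x \<in> {k \<in> Hn n. F k c \<noteq> 0}" "y \<in> {k \<in> Hn n. F k c \<noteq> 0}"
      then show "x = y" using Kinj Fnz by (metis (mono_tags, lifting) mem_Collect_eq)
    qed
  qed
  have sip0: "sipow le (grp_carrier n) (f i) 0 = sone" for i unfolding sipow_def by simp
  have ss: "smult sone sone = (sone :: 'g grp \<Rightarrow> 'k)"
    unfolding sone_eq smult_xmono conv_delta_right by simp
  have sp1: "sprod (\<lambda>i. (sone :: 'g grp \<Rightarrow> 'k)) m = sone" for m
    by (induction m) (simp_all add: ss)
  have F0: "F (\<lambda>_. 0) = xmono (coeffx Phi (\<lambda>_. 0)) (\<lambda>_. 0)"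
  proof -
    have "F (\<lambda>_. 0) = smult (embG (coeffx Phi (\<lambda>_. 0))) sone"
      unfolding F_def sip0 sp1 by simp
    also have "\<dots> = xmono (coeffx Phi (\<lambda>_. 0)) (\<lambda>_. 0)"
      unfolding embG_eq sone_eq smult_xmono conv_delta_right by simp
    finally show ?thesis .
  qed
  have CT: "CT_x (sum_fam F (Hn n)) = CT_f Phi"
  proof
    fix g
    let ?X = "{k \<in> Hn n. F k (g, \<lambda>_. 0) \<noteq> 0}"
    have X0: "?X \<subseteq> {\<lambda>_. 0}"
    proof
      fix k assume k: "k \<in> ?X"
      then have "K k = K (\<lambda>_. 0)" using Fnz K0 by fastforce
      then show "k \<in> {\<lambda>_. 0}" using Kinj k Hn_zero by blast
    qed
    have F0g: "F (\<lambda>_. 0) (g, \<lambda>_. 0) = Phi (g, \<lambda>_. 0)" unfolding F0 xmono_def coeffx_def by simp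
    have "sum_fam F (Hn n) (g, \<lambda>_. 0) = Phi (g, \<lambda>_. 0)"
    proof (cases "Phi (g, \<lambda>_. 0) = 0")
      case True
      then have "?X = {}" using X0 F0g by auto
      then show ?thesis unfolding sum_fam_def using True by simp
    next
      case False
      then have "?X = {\<lambda>_. 0}" using X0 F0g Hn_zero by auto
      then show ?thesis unfolding sum_fam_def using F0g by simp
    qed
    then show "CT_x (sum_fam F (Hn n)) g = CT_f Phi g"
      unfolding CT_x_def CT_f_def coeffx_def by simp
  qed
  show ?thesis unfolding Let_def f_def[symmetric] F_def[symmetric]
    using summ CT by (simp add: CT_f_def)
qed

end

theorem mainTheorem12:
  fixes n :: nat
    and le :: "('g::ab_group_add) grp \<Rightarrow> 'g grp \<Rightarrow> bool"
    and a :: "nat \<Rightarrow> 'g \<Rightarrow> 'k::field"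
    and B :: "nat \<Rightarrow> nat \<Rightarrow> int"
    and Phi :: "'g grp \<Rightarrow> 'k"
  assumes ord: "ordered_group_on (grp_carrier n) le"
    and a_MN: "\<forall>i<n. a i \<in> MN (leG le) UNIV"
    and a_nz: "\<forall>i<n. a i \<noteq> (\<lambda>_. 0)"
    and detB: "det_n n B \<noteq> 0"
    and Phi_MN: "Phi \<in> MN (le_f le n (\<lambda>i. init_exp (leG le) (a i)) B) (grp_carrier n)"
  shows "let f = (\<lambda>i. xmono (a i) (brow n B i));
             F = (\<lambda>k. smult (embG (coeffx Phi k))
                        (sprod (\<lambda>i. sipow le (grp_carrier n) (f i) (k i)) n))
         in summable_fam le (grp_carrier n) F (Hn n)
            \<and> CT_x (sum_fam F (Hn n)) = CT_f Phi
            \<and> CT_f Phi = coeffx Phi (\<lambda>_. 0)"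
proof -
  interpret setting n le by unfold_locales (rule ord)
  show ?thesis by (rule main[OF a_MN a_nz detB Phi_MN])
qed

end
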